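(* Let $n\ge 3$ and let $\phi_n\colon PB_n\to G_n^3$ be the homomorphism defined below. If $\beta\in PB_n$ is a Brunnian braid, then $\phi_n(\beta)$ is Brunnian in $G_n^3$, i.e. $q_m(\phi_n(\beta))=1$ for every $m\in\{1,\dots,n\}$.
   Context: $PB_n$ is the pure braid group on $n$ strands with the standard generators $b_{ij}$, $1\le i<j\le n$. For $m\in\{1,\dots,n\}$ let $p_m\colon PB_n\to PB_{n-1}$ be the strand-deletion homomorphism: $p_m(b_{ij})=1$ if $m\in\{i,j\}$, and otherwise $p_m(b_{ij})=b_{i'j'}$ where $i'=i$ if $i<m$ and $i'=i-1$ if $i>m$ (similarly for $j'$). A pure braid $\beta\in PB_n$ is Brunnian if $p_m(\beta)=1$ for every $m\in\{1,\dots,n\}$. $G_n^3$ is the group with generators $a_{ijk}$, one for each $3$-element subset $\{i,j,k\}\subset\{1,\dots,n\}$ (the symbol $a_{ijk}$ is symmetric in its indices), and relations: $a_{ijk}^2=1$; $a_{ijk}a_{stu}=a_{stu}a_{ijk}$ whenever $|\{i,j,k\}\cap\{s,t,u\}|<2$; and $a_{ijk}a_{ijl}a_{ikl}a_{jkl}=a_{jkl}a_{ikl}a_{ijl}a_{ijk}$ for distinct $i,j,k,l$. For $m\in\{1,\dots,n\}$ let $q_m\colon G_n^3\to G_{n-1}^3$ be the homomorphism with $q_m(a_{ijk})=1$ if $m\in\{i,j,k\}$, and otherwise $q_m(a_{ijk})=a_{i'j'k'}$ where each index larger than $m$ is decreased by $1$ and indices smaller than $m$ are unchanged. An element $x\in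 G_n^3$ is called Brunnian if $q_m(x)=1$ for every $m\in\{1,\dots,n\}$. For $1\le i<j\le n$ put $c_{i,j}=a_{i,j,j+1}a_{i,j,j+2}\cdots a_{i,j,n}\,a_{i,j,1}a_{i,j,2}\cdots a_{i,j,j-1}\in G_n^3$, where the factor with third index equal to $i$ is omitted. The homomorphism $\phi_n\colon PB_n\to G_n^3$ (established earlier in the paper to be a well-defined homomorphism) is given by $\phi_n(b_{ij})=c_{i,i+1}^{-1}c_{i,i+2}^{-1}\cdots c_{i,j-1}^{-1}\,c_{i,j}^2\,c_{i,j-1}\cdots c_{i,i+2}c_{i,i+1}$. *)

theory Defs
  imports Main
begin

text \<open>A word over generators of type 'g: a list of letters (x, b), where b = True
  means the inverse letter x^-1.\<close>
type_synonym 'g word = "('g \<times> bool) list"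

definition inv_word :: "'g word \<Rightarrow> 'g word" where
  "inv_word w = rev (map (\<lambda>(x, b). (x, \<not> b)) w)"

text \<open>Equality in the group presented by relators R: the congruence on words
  generated by free cancellation and by deleting relators.\<close>
inductive eqv :: "'g word set \<Rightarrow> 'g word \<Rightarrow> 'g word \<Rightarrow> bool" for R where
  eqv_refl: "eqv R u u"
| eqv_sym: "eqv R u v \<Longrightarrow> eqv R v u"
| eqv_trans: "eqv R u v \<Longrightarrow> eqv R v w \<Longrightarrow> eqv R u w"
| eqv_cancel: "eqv R (u @ [(x, b), (x, \<not> b)] @ v) (u @ v)"
| eqv_rel: "r \<in> R \<Longrightarrow> eqv R (u @ r @ v) (u @ v)"

definition word_map :: "('g \<Rightarrow> 'h word) \<Rightarrow> 'g word \<Rightarrow> 'h word" where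
  "word_map f w = concat (map (\<lambda>(x, b). if b then inv_word (f x) else f x) w)"

definition gen :: "'g \<Rightarrow> 'g word" where
  "gen x = [(x, False)]"

text \<open>Generators b_ij are pairs (i,j) with 1 <= i < j <= n. Relations (Birman):
  for 1<=r<s<=n, 1<=i<j<=n,
  b_rs^-1 b_ij b_rs = b_ij                         if s<i or i<r<s<j,
                    = b_rj b_ij b_rj^-1              if s=i,
                    = b_rj b_sj b_ij b_sj^-1 b_rj^-1  if i=r<s<j,
                    = b_rj b_sj b_rj^-1 b_sj^-1 b_ij b_sj b_rj b_sj^-1 b_rj^-1  if r<i<s<j.\<close>

definition pb_rhs :: "nat \<Rightarrow> nat \<Rightarrow> nat \<Rightarrow> nat \<Rightarrow> (nat \<times> nat) word" where
  "pb_rhs r s i j =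
    (let X = (\<lambda>a b. gen (a, b)); I = (\<lambda>a b. inv_word (gen (a, b))) in
     if s < i \<or> (i < r \<and> s < j) then X i j
     else if s = i then X r j @ X i j @ I r j
     else if i = r \<and> s < j then X r j @ X s j @ X i j @ I s j @ I r j
     else X r j @ X s j @ I r j @ I s j @ X i j @ X s j @ X r j @ I s j @ I r j)"

definition pb_cond :: "nat \<Rightarrow> nat \<Rightarrow> nat \<Rightarrow> nat \<Rightarrow> bool" where
  "pb_cond r s i j \<longleftrightarrow> s < i \<or> (i < r \<and> s < j) \<or> s = i \<or> (i = r \<and> s < j)
      \<or> (r < i \<and> i < s \<and> s < j)"

definition PB_rels :: "nat \<Rightarrow> (nat \<times> nat) word set" where
  "PB_rels n = {inv_word (gen (r, s)) @ gen (i, j) @ gen (r, s) @ inv_word (pb_rhs r s i j) | r s i j.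
      1 \<le> r \<and> r < s \<and> s \<le> n \<and> 1 \<le> i \<and> i < j \<and> j \<le> n \<and> pb_cond r s i j}"

text \<open>Index shift after deleting strand m.\<close>
definition sh :: "nat \<Rightarrow> nat \<Rightarrow> nat" where
  "sh m i = (if i < m then i else i - 1)"

definition pdel :: "nat \<Rightarrow> nat \<times> nat \<Rightarrow> (nat \<times> nat) word" where
  "pdel m ij = (if m = fst ij \<or> m = snd ij then [] else gen (sh m (fst ij), sh m (snd ij)))"

definition is_PB_word :: "nat \<Rightarrow> (nat \<times> nat) word \<Rightarrow> bool" where
  "is_PB_word n w \<longleftrightarrow> (\<forall>((i, j), b) \<in> set w. 1 \<le> i \<and> i < j \<and> j \<le> n)"

definition Brunnian_braid :: "nat \<Rightarrow> (nat \<times> nat) word \<Rightarrow> bool" where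
  "Brunnian_braid n w \<longleftrightarrow> (\<forall>m \<in> {1..n}. eqv (PB_rels (n - 1)) (word_map (pdel m) w) [])"

text \<open>Generators a_ijk are 3-element subsets of {1..n}.\<close>
definition a :: "nat \<Rightarrow> nat \<Rightarrow> nat \<Rightarrow> nat set word" where
  "a i j k = gen {i, j, k}"

definition G_rels :: "nat \<Rightarrow> nat set word set" where
  "G_rels n =
     {gen S @ gen S | S. S \<subseteq> {1..n} \<and> card S = 3}
   \<union> {gen S @ gen T @ inv_word (gen S) @ inv_word (gen T) | S T.
        S \<subseteq> {1..n} \<and> card S = 3 \<and> T \<subseteq> {1..n} \<and> card T = 3 \<and> card (S \<inter> T) < 2}
   \<union> {a i j k @ a i j l @ a i k l @ a j k l @ inv_word (a j k l @ a i k l @ a i j l @ a i j k) | i j k l.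
        i \<in> {1..n} \<and> j \<in> {1..n} \<and> k \<in> {1..n} \<and> l \<in> {1..n} \<and> distinct [i, j, k, l]}"

definition qdel :: "nat \<Rightarrow> nat set \<Rightarrow> nat set word" where
  "qdel m S = (if m \<in> S then [] else gen (sh m ` S))"

definition Brunnian_G :: "nat \<Rightarrow> nat set word \<Rightarrow> bool" where
  "Brunnian_G n x \<longleftrightarrow> (\<forall>m \<in> {1..n}. eqv (G_rels (n - 1)) (word_map (qdel m) x) [])"

definition c :: "nat \<Rightarrow> nat \<Rightarrow> nat \<Rightarrow> nat set word" where
  "c n i j = concat (map (\<lambda>k. a i j k) (filter (\<lambda>k. k \<noteq> i) ([j+1..<n+1] @ [1..<j])))"

definition phi :: "nat \<Rightarrow> nat \<times> nat \<Rightarrow> nat set word" where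
  "phi n ij = (let i = fst ij; j = snd ij;
                  M = concat (map (c n i) (rev [i+1..<j]))
               in inv_word M @ c n i j @ c n i j @ M)"

end

theory Submission
  imports Defs
begin

lemma inv_word_append[simp]: "inv_word (u @ v) = inv_word v @ inv_word u"
  by (simp add: inv_word_def)
lemma inv_word_Nil[simp]: "inv_word [] = []" by (simp add: inv_word_def)
lemma inv_word_Cons[simp]: "inv_word ((x,b) # w) = inv_word w @ [(x, \<not> b)]"
  by (simp add: inv_word_def)
lemma inv_word_inv[simp]: "inv_word (inv_word u) = u"
  by (induction u) (auto simp: inv_word_def)
lemma inv_word_length[simp]: "length (inv_word u) = length u" by (simp add: inv_word_def)

lemma word_map_append[simp]: "word_map f (u @ v) = word_map f u @ word_map f v"
  by (simp add: word_map_def)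
lemma word_map_Nil[simp]: "word_map f [] = []" by (simp add: word_map_def)
lemma word_map_Cons[simp]: "word_map f ((x,b) # w) = (if b then inv_word (f x) else f x) @ word_map f w"
  by (simp add: word_map_def)
lemma word_map_inv[simp]: "word_map f (inv_word u) = inv_word (word_map f u)"
  by (induction u) auto
lemma word_map_gen[simp]: "word_map f (gen x) = f x" by (simp add: gen_def)
lemma inv_gen: "inv_word (gen x) = [(x, True)]" by (simp add: gen_def)

lemma eqv_ctx0: "eqv R x y \<Longrightarrow> eqv R (pp @ x @ qq) (pp @ y @ qq)"
proof (induction rule: eqv.induct)
  case (eqv_refl u) then show ?case by (rule eqv.eqv_refl)
next
  case (eqv_sym u v) then show ?case by (blast intro: eqv.eqv_sym)
next
  case (eqv_trans u v w) then show ?case by (metis eqv.eqv_trans)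
next
  case (eqv_cancel u' x b v')
  have "eqv R ((pp @ u') @ [(x, b), (x, \<not> b)] @ (v' @ qq)) ((pp @ u') @ (v' @ qq))"
    by (rule eqv.eqv_cancel)
  then show ?case by simp
next
  case (eqv_rel r u' v')
  have "eqv R ((pp @ u') @ r @ (v' @ qq)) ((pp @ u') @ (v' @ qq))"
    by (rule eqv.eqv_rel[OF eqv_rel])
  then show ?case by simp
qed

lemma eqv_ctx: "eqv R x y \<Longrightarrow> eqv R (u @ x @ v) (u @ y @ v)"
  by (rule eqv_ctx0)

lemma eqv_trans': "eqv R u v \<Longrightarrow> eqv R v w \<Longrightarrow> eqv R u w" by (rule eqv.eqv_trans)
lemma eqv_sym': "eqv R u v \<Longrightarrow> eqv R v u" by (rule eqv.eqv_sym)
lemma eqv_refl': "eqv R u u" by (rule eqv.eqv_refl)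

lemmas eqv_trans_calc[trans] = eqv_trans'

lemma eqv_app: "eqv R x x' \<Longrightarrow> eqv R y y' \<Longrightarrow> eqv R (x @ y) (x' @ y')"
proof -
  assume a: "eqv R x x'" and b: "eqv R y y'"
  have "eqv R ([] @ x @ y) ([] @ x' @ y)" by (rule eqv_ctx[OF a])
  moreover have "eqv R (x' @ y @ []) (x' @ y' @ [])" by (rule eqv_ctx[OF b])
  ultimately show ?thesis by (auto intro: eqv_trans')
qed

lemma eqv_step: "eqv R x y \<Longrightarrow> w1 = u @ x @ v \<Longrightarrow> w2 = u @ y @ v \<Longrightarrow> eqv R w1 w2"
  using eqv_ctx by blast

lemma eqv_cancel_word: "eqv R (w @ inv_word w) []"
proof (induction w rule: rev_induct)
  case Nil then show ?case by (simp add: eqv_refl')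
next
  case (snoc a w)
  obtain x b where ab: "a = (x,b)" by (cases a)
  have "eqv R (w @ [(x, b), (x, \<not> b)] @ inv_word w) (w @ inv_word w)"
    by (rule eqv.eqv_cancel)
  then show ?case using snoc ab by (auto simp: inv_word_def intro: eqv_trans')
qed

lemma eqv_cancel_word': "eqv R (inv_word w @ w) []"
  using eqv_cancel_word[of R "inv_word w"] by simp

lemma eqv_rel0: "r \<in> R \<Longrightarrow> eqv R r []"
  using eqv.eqv_rel[of r R "[]" "[]"] by simp

lemma eqv_inv: "eqv R u v \<Longrightarrow> eqv R (inv_word u) (inv_word v)"
proof (induction rule: eqv.induct)
  case (eqv_refl u) then show ?case by (rule eqv.eqv_refl)
next
  case (eqv_sym u v) then show ?case by (blast intro: eqv.eqv_sym)
next
  case (eqv_trans u v w) then show ?case by (metis eqv.eqv_trans)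
next
  case (eqv_cancel u x b v)
  have "eqv R (inv_word v @ [(x, b), (x, \<not> b)] @ inv_word u) (inv_word v @ inv_word u)"
    by (rule eqv.eqv_cancel)
  then show ?case by (simp add: inv_word_def)
next
  case (eqv_rel r u v)
  have r0: "eqv R r []" by (rule eqv_rel0[OF eqv_rel])
  have "eqv R (inv_word r @ [] @ []) (inv_word r @ r @ [])" by (rule eqv_ctx[OF eqv_sym'[OF r0]])
  then have "eqv R (inv_word r) (inv_word r @ r)" by simp
  also have "eqv R (inv_word r @ r) []" by (rule eqv_cancel_word')
  finally have "eqv R (inv_word r) []" .
  then have "eqv R (inv_word v @ inv_word r @ inv_word u) (inv_word v @ [] @ inv_word u)"
    by (rule eqv_ctx)
  then show ?case by simp
qed


lemma eqv_of_rel: "l @ inv_word r \<in> R \<Longrightarrow> eqv R l r"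
proof -
  assume a: "l @ inv_word r \<in> R"
  have "eqv R (l @ [] @ []) (l @ (inv_word r @ r) @ [])"
    by (rule eqv_ctx[OF eqv_sym'[OF eqv_cancel_word'[of R r]]])
  then have "eqv R l (l @ inv_word r @ r)" by simp
  also have "eqv R (l @ inv_word r @ r) ([] @ r)"
    using eqv_ctx[OF eqv_rel0[OF a], of "[]" r] by simp
  finally show ?thesis by simp
qed

lemma eqv_rel_to_nil: "eqv R l r \<Longrightarrow> eqv R (l @ inv_word r) []"
proof -
  assume a: "eqv R l r"
  have "eqv R ([] @ l @ inv_word r) ([] @ r @ inv_word r)" by (rule eqv_ctx[OF a])
  then show ?thesis using eqv_cancel_word[of R r] eqv_trans' by fastforce
qed

lemma eqv_nil_to_rel: "eqv R (l @ inv_word r) [] \<Longrightarrow> eqv R l r"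
proof -
  assume a: "eqv R (l @ inv_word r) []"
  have "eqv R (l @ [] @ []) (l @ (inv_word r @ r) @ [])"
    by (rule eqv_ctx[OF eqv_sym'[OF eqv_cancel_word'[of R r]]])
  then have "eqv R l (l @ inv_word r @ r)" by simp
  also have "eqv R (l @ inv_word r @ r) ([] @ r)"
    using eqv_ctx[OF a, of "[]" r] by simp
  finally show ?thesis by simp
qed

lemma eqv_mono: "eqv R u v \<Longrightarrow> R \<subseteq> S \<Longrightarrow> eqv S u v"
proof (induction rule: eqv.induct)
  case (eqv_rel r u v) then show ?case by (auto intro: eqv.eqv_rel)
next
  case (eqv_cancel u x b v) then show ?case using eqv.eqv_cancel[of S u x b v] by simp
qed (auto intro: eqv.intros)

lemma eqv_hom:
  assumes "\<And>r. r \<in> R \<Longrightarrow> eqv S (word_map f r) []"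
  shows "eqv R u v \<Longrightarrow> eqv S (word_map f u) (word_map f v)"
proof (induction rule: eqv.induct)
  case (eqv_refl u) then show ?case by (rule eqv.eqv_refl)
next
  case (eqv_sym u v) then show ?case by (blast intro: eqv.eqv_sym)
next
  case (eqv_trans u v w) then show ?case by (metis eqv.eqv_trans)
next
  case (eqv_cancel u x b v)
  have "eqv S (word_map f [(x, b), (x, \<not> b)]) []"
    using eqv_cancel_word[of S "f x"] eqv_cancel_word'[of S "f x"] by (cases b) auto
  then have "eqv S (word_map f u @ word_map f [(x, b), (x, \<not> b)] @ word_map f v) (word_map f u @ [] @ word_map f v)"
    by (rule eqv_ctx)
  then show ?case by simp
next
  case (eqv_rel r u v)
  have "eqv S (word_map f u @ word_map f r @ word_map f v) (word_map f u @ [] @ word_map f v)"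
    by (rule eqv_ctx[OF assms[OF eqv_rel]])
  then show ?case by simp
qed

lemma eqv_word_map_cong:
  assumes "\<And>x b. (x,b) \<in> set w \<Longrightarrow> eqv R (f x) (g x)"
  shows "eqv R (word_map f w) (word_map g w)"
  using assms
proof (induction w)
  case Nil then show ?case by (simp add: eqv_refl')
next
  case (Cons a w)
  obtain x b where ab: "a = (x,b)" by (cases a)
  have h: "eqv R (f x) (g x)" using Cons ab by auto
  have h1: "eqv R (if b then inv_word (f x) else f x) (if b then inv_word (g x) else g x)"
    using h eqv_inv by auto
  have h2: "eqv R (word_map f w) (word_map g w)" using Cons by auto
  show ?case using eqv_app[OF h1 h2] ab by simp
qed

lemma word_map_comp: "word_map f (word_map g w) = word_map (\<lambda>x. word_map f (g x)) w"
  by (induction w) auto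


section \<open>Generic commutation\<close>

lemma comm_letter_list:
  assumes "\<And>b. b \<in> set v \<Longrightarrow> eqv R [e, b] [b, e]"
  shows "eqv R ([e] @ v) (v @ [e])"
  using assms
proof (induction v)
  case Nil then show ?case by (simp add: eqv_refl')
next
  case (Cons b v)
  have 1: "eqv R (e # b # v) (b # e # v)" using eqv_ctx[of R "[e,b]" "[b,e]" "[]" v] Cons by auto
  have 2: "eqv R (b # e # v) (b # v @ [e])" using eqv_ctx[of R "[e] @ v" "v @ [e]" "[b]" "[]"] Cons by auto
  show ?case using eqv_trans'[OF 1 2] by simp
qed

lemma comm_lists:
  assumes "\<And>e b. e \<in> set u \<Longrightarrow> b \<in> set v \<Longrightarrow> eqv R [e, b] [b, e]"
  shows "eqv R (u @ v) (v @ u)"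
  using assms
proof (induction u)
  case Nil then show ?case by (simp add: eqv_refl')
next
  case (Cons e u)
  have 1: "eqv R (e # u @ v) (e # v @ u)" using eqv_ctx[of R "u @ v" "v @ u" "[e]" "[]"] Cons by auto
  have 3: "eqv R ([e] @ v) (v @ [e])" by (rule comm_letter_list) (use Cons in auto)
  have 2: "eqv R (e # v @ u) (v @ e # u)" using eqv_ctx[OF 3, of "[]" u] by simp
  show ?case using eqv_trans'[OF 1 2] by simp
qed

definition valid3 :: "nat \<Rightarrow> nat set \<Rightarrow> bool" where
  "valid3 N S \<longleftrightarrow> S \<subseteq> {1..N} \<and> card S = 3"

lemma valid3I: "x \<in> {1..N} \<Longrightarrow> y \<in> {1..N} \<Longrightarrow> z \<in> {1..N} \<Longrightarrow> x \<noteq> y \<Longrightarrow> x \<noteq> z \<Longrightarrow> y \<noteq> z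
   \<Longrightarrow> valid3 N {x, y, z}"
  by (auto simp: valid3_def)

lemma G_sq: "valid3 N S \<Longrightarrow> eqv (G_rels N) [(S,False),(S,False)] []"
  by (rule eqv_rel0) (auto simp: G_rels_def gen_def valid3_def)

lemma G_inv: "valid3 N S \<Longrightarrow> eqv (G_rels N) [(S,True)] [(S,False)]"
proof -
  assume v: "valid3 N S"
  have "eqv (G_rels N) [(S,True)] ([(S,True)] @ [(S,False),(S,False)])"
    using eqv_ctx[OF eqv_sym'[OF G_sq[OF v]], of "[(S,True)]" "[]"] by simp
  also have "eqv (G_rels N) ([(S,True)] @ [(S,False),(S,False)]) [(S,False)]"
    using eqv.eqv_cancel[of "G_rels N" "[]" S True "[(S,False)]"] by simp
  finally show ?thesis .
qed

lemma G_comm: "valid3 N S \<Longrightarrow> valid3 N T \<Longrightarrow> card (S \<inter> T) < 2 \<Longrightarrow>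
   eqv (G_rels N) [(S,False),(T,False)] [(T,False),(S,False)]"
proof -
  assume a: "valid3 N S" "valid3 N T" "card (S \<inter> T) < 2"
  have "[(S,False),(T,False)] @ inv_word [(T,False),(S,False)] \<in> G_rels N"
    using a unfolding G_rels_def valid3_def gen_def inv_word_def by auto
  then show ?thesis by (rule eqv_of_rel)
qed

lemma G_tet:
  assumes "i \<in> {1..N}" "j \<in> {1..N}" "k \<in> {1..N}" "l \<in> {1..N}" "distinct [i,j,k,l]"
  shows "eqv (G_rels N) [({i,j,k},False),({i,j,l},False),({i,k,l},False),({j,k,l},False)]
                        [({j,k,l},False),({i,k,l},False),({i,j,l},False),({i,j,k},False)]"
proof -
  have "[({i,j,k},False),({i,j,l},False),({i,k,l},False),({j,k,l},False)] @
        inv_word [({j,k,l},False),({i,k,l},False),({i,j,l},False),({i,j,k},False)] \<in> G_rels N"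
    unfolding G_rels_def
    apply (rule UnI2)
    apply (simp only: mem_Collect_eq)
    apply (rule exI[of _ i], rule exI[of _ j], rule exI[of _ k], rule exI[of _ l])
    using assms by (simp add: a_def gen_def inv_word_def)
  then show ?thesis by (rule eqv_of_rel)
qed

lemma card_lt2I: "S \<inter> T \<subseteq> {w} \<Longrightarrow> card (S \<inter> T) < 2"
proof -
  assume "S \<inter> T \<subseteq> {w}"
  then have "card (S \<inter> T) \<le> card {w}" by (rule card_mono[rotated]) simp
  then show ?thesis by simp
qed

lemma card_lt2_empty: "S \<inter> T = {} \<Longrightarrow> card (S \<inter> T) < 2" by simp


definition sw :: "nat \<Rightarrow> (nat \<Rightarrow> nat) \<Rightarrow> (nat \<Rightarrow> nat)" where
  "sw p \<pi> = \<pi>(p := \<pi> (Suc p), Suc p := \<pi> p)"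
definition stp :: "nat \<Rightarrow> (nat \<Rightarrow> nat) \<Rightarrow> nat \<Rightarrow> (nat \<Rightarrow> nat)" where
  "stp N \<pi> p = (if 1 \<le> p \<and> p < N then sw p \<pi> else \<pi>)"
definition cyc :: "nat \<Rightarrow> nat \<Rightarrow> nat list" where
  "cyc N p = [p+2..<N+1] @ [1..<p]"
definition wd :: "nat \<Rightarrow> (nat \<Rightarrow> nat) \<Rightarrow> nat \<Rightarrow> nat set word" where
  "wd N \<pi> p = map (\<lambda>q. ({\<pi> p, \<pi> (Suc p), \<pi> q}, False)) (cyc N p)"

fun Phi :: "nat \<Rightarrow> (nat \<Rightarrow> nat) \<Rightarrow> (nat \<times> bool) list \<Rightarrow> nat set word" where
  "Phi N \<pi> [] = []"
| "Phi N \<pi> ((p,b) # w) = (if b then inv_word (wd N \<pi> p) else wd N \<pi> p) @ Phi N (stp N \<pi> p) w"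

fun endp :: "nat \<Rightarrow> (nat \<Rightarrow> nat) \<Rightarrow> (nat \<times> bool) list \<Rightarrow> (nat \<Rightarrow> nat)" where
  "endp N \<pi> [] = \<pi>"
| "endp N \<pi> ((p,b) # w) = endp N (stp N \<pi> p) w"

lemma sw_sw[simp]: "sw p (sw p \<pi>) = \<pi>"
  by (rule ext) (auto simp: sw_def)
lemma stp_stp[simp]: "stp N (stp N \<pi> p) p = \<pi>"
  by (simp add: stp_def)

lemma cyc_not: "q \<in> set (cyc N p) \<Longrightarrow> q \<noteq> p \<and> q \<noteq> Suc p \<and> 1 \<le> q \<and> (p \<le> N \<longrightarrow> q \<le> N)"
  by (auto simp: cyc_def)

lemma wd_sw[simp]: "wd N (sw p \<pi>) p = wd N \<pi> p"
  unfolding wd_def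
proof (rule map_cong[OF refl])
  fix q assume "q \<in> set (cyc N p)"
  then have "q \<noteq> p" "q \<noteq> Suc p" using cyc_not by auto
  then show "({sw p \<pi> p, sw p \<pi> (Suc p), sw p \<pi> q}, False) = ({\<pi> p, \<pi> (Suc p), \<pi> q}, False)"
    by (auto simp: sw_def)
qed

lemma wd_stp[simp]: "wd N (stp N \<pi> p) p = wd N \<pi> p"
  by (simp add: stp_def)

lemma Phi_append: "Phi N \<pi> (u @ v) = Phi N \<pi> u @ Phi N (endp N \<pi> u) v"
  by (induction u arbitrary: \<pi>) auto

lemma endp_append: "endp N \<pi> (u @ v) = endp N (endp N \<pi> u) v"
  by (induction u arbitrary: \<pi>) auto

lemma Phi_inv: "Phi N (endp N \<pi> w) (inv_word w) = inv_word (Phi N \<pi> w) \<and> endp N (endp N \<pi> w) (inv_word w) = \<pi>"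
proof (induction w arbitrary: \<pi>)
  case Nil then show ?case by simp
next
  case (Cons e w)
  obtain p b where e: "e = (p,b)" by (cases e)
  have IH: "Phi N (endp N (stp N \<pi> p) w) (inv_word w) = inv_word (Phi N (stp N \<pi> p) w)"
       "endp N (endp N (stp N \<pi> p) w) (inv_word w) = stp N \<pi> p" using Cons[of "stp N \<pi> p"] by auto
  show ?case using IH e by (auto simp: Phi_append endp_append)
qed

definition pm :: "nat \<Rightarrow> (nat \<Rightarrow> nat) \<Rightarrow> bool" where
  "pm N \<pi> \<longleftrightarrow> bij_betw \<pi> {1..N} {1..N}"

lemma pm_sw: assumes "pm N \<pi>" "1 \<le> p" "p < N" shows "pm N (sw p \<pi>)"
proof -
  define \<tau> where "\<tau> = (\<lambda>t::nat. if t = p then Suc p else if t = Suc p then p else t)"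
  have tt: "\<And>t. \<tau> (\<tau> t) = t" by (simp add: \<tau>_def)
  have ts: "\<tau> ` {1..N} \<subseteq> {1..N}" using assms(2,3) by (auto simp: \<tau>_def)
  have t: "bij_betw \<tau> {1..N} {1..N}"
    by (rule bij_betw_byWitness[of _ \<tau>]) (use tt ts in auto)
  have "sw p \<pi> = \<pi> \<circ> \<tau>" by (rule ext) (simp add: sw_def \<tau>_def)
  then show ?thesis using bij_betw_trans[OF t] assms(1) by (simp add: pm_def)
qed

lemma pm_stp: "pm N \<pi> \<Longrightarrow> pm N (stp N \<pi> p)"
  by (simp add: stp_def pm_sw)

lemma pm_endp: "pm N \<pi> \<Longrightarrow> pm N (endp N \<pi> w)"
  by (induction w arbitrary: \<pi>) (auto simp: pm_stp)

lemma pm_range: "pm N \<pi> \<Longrightarrow> t \<in> {1..N} \<Longrightarrow> \<pi> t \<in> {1..N}"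
  unfolding pm_def by (rule bij_betw_apply)

lemma pm_inj: "pm N \<pi> \<Longrightarrow> t \<in> {1..N} \<Longrightarrow> s \<in> {1..N} \<Longrightarrow> \<pi> t = \<pi> s \<longleftrightarrow> t = s"
  unfolding pm_def by (meson bij_betw_imp_inj_on inj_on_eq_iff)


lemma cross_ok:
  assumes "x \<in> {1..N}" "y \<in> {1..N}" "z \<in> {1..N}" "u \<in> {1..N}"
    "x \<noteq> y" "x \<noteq> z" "x \<noteq> u" "y \<noteq> z" "y \<noteq> u" "z \<noteq> u"
    "\<alpha> \<in> {1..N}" "\<beta> \<in> {1..N}" "\<alpha> \<noteq> x" "\<alpha> \<noteq> y" "\<beta> \<noteq> z" "\<beta> \<noteq> u"
    "\<alpha> = z \<or> \<alpha> = u \<Longrightarrow> \<beta> \<noteq> x \<and> \<beta> \<noteq> y"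
  shows "eqv (G_rels N) [({x,y,\<alpha>},False),({z,u,\<beta>},False)] [({z,u,\<beta>},False),({x,y,\<alpha>},False)]"
proof (rule G_comm)
  show "valid3 N {x,y,\<alpha>}" by (rule valid3I) (use assms in simp_all)
  show "valid3 N {z,u,\<beta>}" by (rule valid3I) (use assms in simp_all)
  show "card ({x,y,\<alpha>} \<inter> {z,u,\<beta>}) < 2"
  proof (cases "\<alpha> = z \<or> \<alpha> = u")
    case True
    then have "\<beta> \<noteq> x" "\<beta> \<noteq> y" using assms(17) by auto
    then have "{x,y,\<alpha>} \<inter> {z,u,\<beta>} \<subseteq> {\<alpha>}" using assms(5-10) by blast
    then show ?thesis by (rule card_lt2I)
  next
    case False
    then have "{x,y,\<alpha>} \<inter> {z,u,\<beta>} \<subseteq> {\<beta>}" using assms(5-10) by blast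
    then show ?thesis by (rule card_lt2I)
  qed
qed

lemma upt_split: "i \<le> j \<Longrightarrow> j \<le> k \<Longrightarrow> [i..<k] = [i..<j] @ [j..<k]"
  by (metis le_add_diff_inverse upt_add_eq_append)

definition Tl :: "nat \<Rightarrow> nat \<Rightarrow> (nat \<Rightarrow> nat) \<Rightarrow> nat list \<Rightarrow> nat set word" where
  "Tl x y \<pi> L = map (\<lambda>t. ({x, y, \<pi> t}, False)) L"

lemma Tl_append[simp]: "Tl x y \<pi> (A @ B) = Tl x y \<pi> A @ Tl x y \<pi> B"
  by (simp add: Tl_def)

lemma Tl_cong: "(\<And>t. t \<in> set L \<Longrightarrow> \<pi> t = \<sigma> t) \<Longrightarrow> Tl x y \<pi> L = Tl x y \<sigma> L"
  by (simp add: Tl_def)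

lemma far_eq:
  assumes pm: "pm N \<pi>" and p1: "1 \<le> p" and pq: "p + 2 \<le> q" and qN: "q < N"
  shows "eqv (G_rels N) (wd N \<pi> p @ wd N (sw p \<pi>) q) (wd N \<pi> q @ wd N (sw q \<pi>) p)"
proof -
  define x where "x = \<pi> p"
  define y where "y = \<pi> (Suc p)"
  define z where "z = \<pi> q"
  define u where "u = \<pi> (Suc q)"
  define PA where "PA = [p+2..<q]"
  define PB where "PB = [q+2..<N+1] @ [1..<p]"
  have cp: "cyc N p = PA @ [q, Suc q] @ PB"
  proof -
    have "[p+2..<N+1] = [p+2..<q] @ [q..<N+1]" by (rule upt_split) (use pq qN in auto)
    moreover have "[q..<N+1] = q # Suc q # [q+2..<N+1]" using qN by (simp add: upt_conv_Cons)
    ultimately show ?thesis by (simp add: cyc_def PA_def PB_def)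
  qed
  have cq: "cyc N q = PB @ [p, Suc p] @ PA"
  proof -
    have "[1..<q] = [1..<p] @ [p..<q]" by (rule upt_split) (use pq p1 in auto)
    moreover have "[p..<q] = p # Suc p # [p+2..<q]" using pq by (simp add: upt_conv_Cons)
    ultimately show ?thesis by (simp add: cyc_def PA_def PB_def)
  qed
  have posA: "\<And>t. t \<in> set PA \<Longrightarrow> t \<in> {1..N} \<and> t \<noteq> p \<and> t \<noteq> Suc p \<and> t \<noteq> q \<and> t \<noteq> Suc q"
    using p1 pq qN by (auto simp: PA_def)
  have posB: "\<And>t. t \<in> set PB \<Longrightarrow> t \<in> {1..N} \<and> t \<noteq> p \<and> t \<noteq> Suc p \<and> t \<noteq> q \<and> t \<noteq> Suc q"
    using p1 pq qN by (auto simp: PB_def)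
  have inN: "p \<in> {1..N}" "Suc p \<in> {1..N}" "q \<in> {1..N}" "Suc q \<in> {1..N}" using p1 pq qN by auto
  have lab: "\<pi> t \<in> {1..N} \<and> \<pi> t \<noteq> x \<and> \<pi> t \<noteq> y \<and> \<pi> t \<noteq> z \<and> \<pi> t \<noteq> u"
    if "t \<in> set PA \<or> t \<in> set PB" for t
  proof -
    have t: "t \<in> {1..N} \<and> t \<noteq> p \<and> t \<noteq> Suc p \<and> t \<noteq> q \<and> t \<noteq> Suc q"
      using that posA posB by blast
    then show ?thesis unfolding x_def y_def z_def u_def
      using pm_inj[OF pm] pm_range[OF pm] inN by metis
  qed
  have xyzu: "x \<in> {1..N}" "y \<in> {1..N}" "z \<in> {1..N}" "u \<in> {1..N}"
    unfolding x_def y_def z_def u_def using pm_range[OF pm] inN by auto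
  have dist: "x \<noteq> y" "x \<noteq> z" "x \<noteq> u" "y \<noteq> z" "y \<noteq> u" "z \<noteq> u"
    unfolding x_def y_def z_def u_def using pm_inj[OF pm] inN pq by auto
  note C = cross_ok[OF xyzu dist]
  have C': "eqv (G_rels N) [({z,u,\<beta>},False),({x,y,\<alpha>},False)] [({x,y,\<alpha>},False),({z,u,\<beta>},False)]"
    if "\<alpha> \<in> {1..N}" "\<beta> \<in> {1..N}" "\<alpha> \<noteq> x" "\<alpha> \<noteq> y" "\<beta> \<noteq> z" "\<beta> \<noteq> u"
    "\<alpha> = z \<or> \<alpha> = u \<Longrightarrow> \<beta> \<noteq> x \<and> \<beta> \<noteq> y" for \<alpha> \<beta>
    by (rule eqv_sym', rule C) (use that in auto)
  have w1: "wd N \<pi> p = Tl x y \<pi> PA @ [({x,y,z},False), ({x,y,u},False)] @ Tl x y \<pi> PB"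
    by (simp add: wd_def cp Tl_def x_def y_def z_def u_def)
  have w2: "wd N (sw p \<pi>) q = Tl z u \<pi> PB @ [({z,u,y},False), ({z,u,x},False)] @ Tl z u \<pi> PA"
  proof -
    have "wd N (sw p \<pi>) q = Tl z u (sw p \<pi>) PB @ [({z,u,y},False), ({z,u,x},False)] @ Tl z u (sw p \<pi>) PA"
      using pq by (simp add: wd_def cq Tl_def x_def y_def z_def u_def sw_def)
    moreover have "Tl z u (sw p \<pi>) PB = Tl z u \<pi> PB" by (rule Tl_cong) (use posB in \<open>auto simp: sw_def\<close>)
    moreover have "Tl z u (sw p \<pi>) PA = Tl z u \<pi> PA" by (rule Tl_cong) (use posA in \<open>auto simp: sw_def\<close>)
    ultimately show ?thesis by simp
  qed
  have w3: "wd N \<pi> q = Tl z u \<pi> PB @ [({z,u,x},False),({z,u,y},False)] @ Tl z u \<pi> PA"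
    by (simp add: wd_def cq Tl_def x_def y_def z_def u_def)
  have w4: "wd N (sw q \<pi>) p = Tl x y \<pi> PA @ [({x,y,u},False),({x,y,z},False)] @ Tl x y \<pi> PB"
  proof -
    have "wd N (sw q \<pi>) p = Tl x y (sw q \<pi>) PA @ [({x,y,u},False),({x,y,z},False)] @ Tl x y (sw q \<pi>) PB"
      using pq by (simp add: wd_def cp Tl_def x_def y_def z_def u_def sw_def)
    moreover have "Tl x y (sw q \<pi>) PB = Tl x y \<pi> PB" by (rule Tl_cong) (use posB in \<open>auto simp: sw_def\<close>)
    moreover have "Tl x y (sw q \<pi>) PA = Tl x y \<pi> PA" by (rule Tl_cong) (use posA in \<open>auto simp: sw_def\<close>)
    ultimately show ?thesis by simp
  qed
  define TA where "TA = Tl x y \<pi> PA"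
  define TB where "TB = Tl x y \<pi> PB"
  define CA where "CA = Tl z u \<pi> PA"
  define CB where "CB = Tl z u \<pi> PB"
  have mTA: "e \<in> set TA \<Longrightarrow> \<exists>t. (t \<in> set PA \<or> t \<in> set PB) \<and> e = ({x,y,\<pi> t},False)" for e
    by (auto simp: TA_def Tl_def)
  have mTB: "e \<in> set TB \<Longrightarrow> \<exists>t. (t \<in> set PA \<or> t \<in> set PB) \<and> e = ({x,y,\<pi> t},False)" for e
    by (auto simp: TB_def Tl_def)
  have mCA: "e \<in> set CA \<Longrightarrow> \<exists>t. (t \<in> set PA \<or> t \<in> set PB) \<and> e = ({z,u,\<pi> t},False)" for e
    by (auto simp: CA_def Tl_def)
  have mCB: "e \<in> set CB \<Longrightarrow> \<exists>t. (t \<in> set PA \<or> t \<in> set PB) \<and> e = ({z,u,\<pi> t},False)" for e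
    by (auto simp: CB_def Tl_def)
  have XX: "eqv (G_rels N) [e, b] [b, e]"
    if he: "e \<in> set TA \<union> set TB \<union> {({x,y,z},False),({x,y,u},False)}"
       and hb: "b \<in> set CA \<union> set CB" for e b
  proof -
    obtain s where s: "s \<in> set PA \<or> s \<in> set PB" "b = ({z,u,\<pi> s},False)" using hb mCA mCB by blast
    show ?thesis
    proof (cases "e \<in> set TA \<union> set TB")
      case True
      obtain t where t: "t \<in> set PA \<or> t \<in> set PB" "e = ({x,y,\<pi> t},False)" using True mTA mTB by blast
      show ?thesis unfolding s t by (rule C) (use lab[OF t(1)] lab[OF s(1)] in auto)
    next
      case False
      then have "e = ({x,y,z},False) \<or> e = ({x,y,u},False)" using he by blast
      then show ?thesis
      proof
        assume e: "e = ({x,y,z},False)"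
        show ?thesis unfolding s e by (rule C) (use lab[OF s(1)] xyzu dist in auto)
      next
        assume e: "e = ({x,y,u},False)"
        show ?thesis unfolding s e by (rule C) (use lab[OF s(1)] xyzu dist in auto)
      qed
    qed
  qed
  have YY: "eqv (G_rels N) [e, b] [b, e]"
    if he: "e \<in> set TA \<union> set TB" and hb: "b \<in> {({z,u,x},False),({z,u,y},False)}" for e b
  proof -
    obtain t where t: "t \<in> set PA \<or> t \<in> set PB" "e = ({x,y,\<pi> t},False)" using he mTA mTB by blast
    from hb show ?thesis
    proof
      assume b: "b = ({z,u,x},False)"
      show ?thesis unfolding b t by (rule C) (use lab[OF t(1)] xyzu dist in auto)
    next
      assume "b \<in> {({z,u,y},False)}"
      then have b: "b = ({z,u,y},False)" by simp
      show ?thesis unfolding b t by (rule C) (use lab[OF t(1)] xyzu dist in auto)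
    qed
  qed
  have s1: "eqv (G_rels N) (TB @ CB) (CB @ TB)" by (rule comm_lists) (rule XX, auto)
  have s2: "eqv (G_rels N) (TB @ [({z,u,y},False), ({z,u,x},False)]) ([({z,u,y},False), ({z,u,x},False)] @ TB)"
    by (rule comm_lists) (rule YY, auto)
  have s3: "eqv (G_rels N) ((TA @ [({x,y,z},False), ({x,y,u},False)]) @ CB) (CB @ (TA @ [({x,y,z},False), ({x,y,u},False)]))"
    by (rule comm_lists) (rule XX, auto)
  have s4: "eqv (G_rels N) [({x,y,z},False), ({x,y,u},False), ({z,u,y},False), ({z,u,x},False)]
                           [({z,u,x},False), ({z,u,y},False), ({x,y,u},False), ({x,y,z},False)]"
  proof -
    have "eqv (G_rels N) [({y,x,z},False),({y,x,u},False),({y,z,u},False),({x,z,u},False)]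
                        [({x,z,u},False),({y,z,u},False),({y,x,u},False),({y,x,z},False)]"
      by (rule G_tet) (use xyzu dist in auto)
    moreover have "{y,x,z} = {x,y,z}" "{y,x,u} = {x,y,u}" "{y,z,u} = {z,u,y}" "{x,z,u} = {z,u,x}" by auto
    ultimately show ?thesis by simp
  qed
  have r1: "eqv (G_rels N) (CA @ (TA @ [({x,y,u},False),({x,y,z},False)] @ TB)) ((TA @ [({x,y,u},False),({x,y,z},False)] @ TB) @ CA)"
  proof (rule eqv_sym', rule comm_lists)
    fix e b assume "e \<in> set (TA @ [({x,y,u},False),({x,y,z},False)] @ TB)" "b \<in> set CA"
    then show "eqv (G_rels N) [e, b] [b, e]" by (intro XX) auto
  qed
  have r2: "eqv (G_rels N) ([({z,u,x},False),({z,u,y},False)] @ TA) (TA @ [({z,u,x},False),({z,u,y},False)])"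
    by (rule eqv_sym', rule comm_lists) (rule YY, auto)
  have L: "eqv (G_rels N) (wd N \<pi> p @ wd N (sw p \<pi>) q)
             (CB @ TA @ [({z,u,x},False), ({z,u,y},False), ({x,y,u},False), ({x,y,z},False)] @ TB @ CA)"
  proof -
    have "wd N \<pi> p @ wd N (sw p \<pi>) q = TA @ [({x,y,z},False), ({x,y,u},False)] @ TB @ CB @ [({z,u,y},False), ({z,u,x},False)] @ CA"
      by (simp add: w1 w2 TA_def TB_def CA_def CB_def)
    also have "eqv (G_rels N) \<dots> (TA @ [({x,y,z},False), ({x,y,u},False)] @ CB @ TB @ [({z,u,y},False), ({z,u,x},False)] @ CA)"
      using eqv_ctx[OF s1, of "TA @ [({x,y,z},False), ({x,y,u},False)]" "[({z,u,y},False), ({z,u,x},False)] @ CA"] by simp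
    also have "eqv (G_rels N) \<dots> (TA @ [({x,y,z},False), ({x,y,u},False)] @ CB @ [({z,u,y},False), ({z,u,x},False)] @ TB @ CA)"
      using eqv_ctx[OF s2, of "TA @ [({x,y,z},False), ({x,y,u},False)] @ CB" "CA"] by simp
    also have "eqv (G_rels N) \<dots> (CB @ TA @ [({x,y,z},False), ({x,y,u},False)] @ [({z,u,y},False), ({z,u,x},False)] @ TB @ CA)"
      using eqv_ctx[OF s3, of "[]" "[({z,u,y},False), ({z,u,x},False)] @ TB @ CA"] by simp
    also have "eqv (G_rels N) \<dots> (CB @ TA @ [({z,u,x},False), ({z,u,y},False), ({x,y,u},False), ({x,y,z},False)] @ TB @ CA)"
      using eqv_ctx[OF s4, of "CB @ TA" "TB @ CA"] by simp
    finally show ?thesis .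
  qed
  have R: "eqv (G_rels N) (wd N \<pi> q @ wd N (sw q \<pi>) p)
             (CB @ TA @ [({z,u,x},False), ({z,u,y},False), ({x,y,u},False), ({x,y,z},False)] @ TB @ CA)"
  proof -
    have "wd N \<pi> q @ wd N (sw q \<pi>) p = CB @ [({z,u,x},False),({z,u,y},False)] @ CA @ TA @ [({x,y,u},False),({x,y,z},False)] @ TB"
      by (simp add: w3 w4 TA_def TB_def CA_def CB_def)
    also have "eqv (G_rels N) \<dots> (CB @ [({z,u,x},False),({z,u,y},False)] @ TA @ [({x,y,u},False),({x,y,z},False)] @ TB @ CA)"
      using eqv_ctx[OF r1, of "CB @ [({z,u,x},False),({z,u,y},False)]" "[]"] by simp
    also have "eqv (G_rels N) \<dots> (CB @ TA @ [({z,u,x},False), ({z,u,y},False), ({x,y,u},False), ({x,y,z},False)] @ TB @ CA)"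
      using eqv_ctx[OF r2, of "CB" "[({x,y,u},False),({x,y,z},False)] @ TB @ CA"] by simp
    finally show ?thesis .
  qed
  show ?thesis using L R by (blast intro: eqv_trans' eqv_sym')
qed


lemma comm3: "valid3 N S \<Longrightarrow> valid3 N T \<Longrightarrow> S \<inter> T \<subseteq> {w} \<Longrightarrow>
   eqv (G_rels N) [(S,False),(T,False)] [(T,False),(S,False)]"
  by (rule G_comm) (auto intro: card_lt2I)

lemma tet_chain:
  assumes xyz: "x \<in> {1..N}" "y \<in> {1..N}" "z \<in> {1..N}" "x \<noteq> y" "x \<noteq> z" "y \<noteq> z"
  shows "distinct R \<Longrightarrow> set R \<subseteq> {1..N} - {x,y,z} \<Longrightarrow>
    eqv (G_rels N) (({x,y,z},False) # map (\<lambda>r. ({x,y,r},False)) R @ map (\<lambda>r. ({x,z,r},False)) R @ map (\<lambda>r. ({y,z,r},False)) R)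
                   (map (\<lambda>r. ({y,z,r},False)) R @ map (\<lambda>r. ({x,z,r},False)) R @ map (\<lambda>r. ({x,y,r},False)) R @ [({x,y,z},False)])"
proof (induction R)
  case Nil then show ?case by (simp add: eqv_refl')
next
  case (Cons r R)
  define X where "X = map (\<lambda>r. ({x,y,r},False)) R"
  define Z where "Z = map (\<lambda>r. ({x,z,r},False)) R"
  define Y where "Y = map (\<lambda>r. ({y,z,r},False)) R"
  define t where "t = ({x,y,z},False)"
  define xr where "xr = ({x,y,r},False)"
  define zr where "zr = ({x,z,r},False)"
  define yr where "yr = ({y,z,r},False)"
  have r: "r \<in> {1..N}" "r \<noteq> x" "r \<noteq> y" "r \<noteq> z" "r \<notin> set R" using Cons.prems by auto
  have RR: "\<And>s. s \<in> set R \<Longrightarrow> s \<in> {1..N} \<and> s \<noteq> x \<and> s \<noteq> y \<and> s \<noteq> z \<and> s \<noteq> r" using Cons.prems by auto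
  have IH: "eqv (G_rels N) (t # X @ Z @ Y) (Y @ Z @ X @ [t])"
    using Cons.IH Cons.prems unfolding X_def Y_def Z_def t_def by auto
  have v: "\<And>s. s \<in> {1..N} \<Longrightarrow> s \<noteq> x \<Longrightarrow> s \<noteq> y \<Longrightarrow> s \<noteq> z \<Longrightarrow> valid3 N {x,y,s} \<and> valid3 N {x,z,s} \<and> valid3 N {y,z,s}"
    using xyz by (auto intro!: valid3I)
  have vr: "valid3 N {x,y,r}" "valid3 N {x,z,r}" "valid3 N {y,z,r}" using v r by auto
  have c1: "eqv (G_rels N) (X @ [zr]) ([zr] @ X)"
  proof (rule comm_lists)
    fix e b assume "e \<in> set X" "b \<in> set [zr]"
    then obtain s where s: "s \<in> set R" "e = ({x,y,s},False)" "b = zr" by (auto simp: X_def)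
    show "eqv (G_rels N) [e, b] [b, e]" unfolding s zr_def
      by (rule comm3[where w=x]) (use v RR[OF s(1)] vr r xyz in auto)
  qed
  have c2: "eqv (G_rels N) ((X @ Z) @ [yr]) ([yr] @ (X @ Z))"
  proof (rule comm_lists)
    fix e b assume "e \<in> set (X @ Z)" "b \<in> set [yr]"
    then obtain s where s: "s \<in> set R" "e = ({x,y,s},False) \<or> e = ({x,z,s},False)" "b = yr" by (auto simp: X_def Z_def)
    from s(2) show "eqv (G_rels N) [e, b] [b, e]"
    proof
      assume e: "e = ({x,y,s},False)"
      show ?thesis unfolding e s(3) yr_def
        by (rule comm3[where w=y]) (use v RR[OF s(1)] vr r xyz in auto)
    next
      assume e: "e = ({x,z,s},False)"
      show ?thesis unfolding e s(3) yr_def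
        by (rule comm3[where w=z]) (use v RR[OF s(1)] vr r xyz in auto)
    qed
  qed
  have c3: "eqv (G_rels N) [t, xr, zr, yr] [yr, zr, xr, t]"
    unfolding t_def xr_def zr_def yr_def by (rule G_tet) (use r xyz in auto)
  have c4: "eqv (G_rels N) ([zr, xr] @ Y) (Y @ [zr, xr])"
  proof (rule comm_lists)
    fix e b assume "e \<in> set [zr, xr]" "b \<in> set Y"
    then obtain s where s: "s \<in> set R" "e = zr \<or> e = xr" "b = ({y,z,s},False)" by (auto simp: Y_def)
    from s(2) show "eqv (G_rels N) [e, b] [b, e]"
    proof
      assume e: "e = zr"
      show ?thesis unfolding e s(3) zr_def
        by (rule comm3[where w=z]) (use v RR[OF s(1)] vr r xyz in auto)
    next
      assume e: "e = xr"
      show ?thesis unfolding e s(3) xr_def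
        by (rule comm3[where w=y]) (use v RR[OF s(1)] vr r xyz in auto)
    qed
  qed
  have c5: "eqv (G_rels N) ([xr] @ Z) (Z @ [xr])"
  proof (rule comm_lists)
    fix e b assume "e \<in> set [xr]" "b \<in> set Z"
    then obtain s where s: "s \<in> set R" "e = xr" "b = ({x,z,s},False)" by (auto simp: Z_def)
    show "eqv (G_rels N) [e, b] [b, e]" unfolding s xr_def
      by (rule comm3[where w=x]) (use v RR[OF s(1)] vr r xyz in auto)
  qed
  have "eqv (G_rels N) (t # xr # X @ zr # Z @ yr # Y) (t # xr # zr # X @ Z @ yr # Y)"
    using eqv_ctx[OF c1, of "[t, xr]" "Z @ yr # Y"] by simp
  also have "eqv (G_rels N) \<dots> (t # xr # zr # yr # X @ Z @ Y)"
    using eqv_ctx[OF c2, of "[t, xr, zr]" "Y"] by simp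
  also have "eqv (G_rels N) \<dots> (yr # zr # xr # t # X @ Z @ Y)"
    using eqv_ctx[OF c3, of "[]" "X @ Z @ Y"] by simp
  also have "eqv (G_rels N) \<dots> (yr # zr # xr # Y @ Z @ X @ [t])"
    using eqv_ctx[OF IH, of "[yr, zr, xr]" "[]"] by simp
  also have "eqv (G_rels N) \<dots> (yr # Y @ zr # xr # Z @ X @ [t])"
    using eqv_ctx[OF c4, of "[yr]" "Z @ X @ [t]"] by simp
  also have "eqv (G_rels N) \<dots> (yr # Y @ zr # Z @ xr # X @ [t])"
    using eqv_ctx[OF c5, of "yr # Y @ [zr]" "X @ [t]"] by simp
  finally show ?case unfolding X_def Y_def Z_def t_def xr_def yr_def zr_def by simp
qed

lemma wd_p_form:
  assumes "\<And>q. q \<in> set RP \<Longrightarrow> \<sigma> q = \<pi> q" "cyc N p = Suc (Suc p) # RP"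
  shows "wd N \<sigma> p = ({\<sigma> p, \<sigma> (Suc p), \<sigma> (Suc (Suc p))},False) # map (\<lambda>r. ({\<sigma> p, \<sigma> (Suc p), r},False)) (map \<pi> RP)"
  using assms by (simp add: wd_def)

lemma wd_Sp_form:
  assumes "\<And>q. q \<in> set RP \<Longrightarrow> \<sigma> q = \<pi> q" "cyc N (Suc p) = RP @ [p]"
  shows "wd N \<sigma> (Suc p) = map (\<lambda>r. ({\<sigma> (Suc p), \<sigma> (Suc (Suc p)), r},False)) (map \<pi> RP) @ [({\<sigma> (Suc p), \<sigma> (Suc (Suc p)), \<sigma> p},False)]"
  using assms by (simp add: wd_def)

lemma braid_eq:
  assumes pm: "pm N \<pi>" and p1: "1 \<le> p" and pN: "p + 2 \<le> N"
  shows "eqv (G_rels N) (Phi N \<pi> [(p,False),(Suc p,False),(p,False),(Suc p,True),(p,True),(Suc p,True)]) []"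
proof -
  define x where "x = \<pi> p"
  define y where "y = \<pi> (Suc p)"
  define z where "z = \<pi> (Suc (Suc p))"
  define RP where "RP = [p+3..<N+1] @ [1..<p]"
  define RL where "RL = map \<pi> RP"
  have c0: "cyc N p = Suc (Suc p) # RP"
    using pN by (simp add: cyc_def RP_def upt_conv_Cons numeral_eq_Suc)
  have c1: "cyc N (Suc p) = RP @ [p]"
    using p1 by (simp add: cyc_def RP_def numeral_eq_Suc)
  have RPpos: "\<And>q. q \<in> set RP \<Longrightarrow> q \<in> {1..N} \<and> q \<noteq> p \<and> q \<noteq> Suc p \<and> q \<noteq> Suc (Suc p)"
    using p1 pN by (auto simp: RP_def)
  have inN: "p \<in> {1..N}" "Suc p \<in> {1..N}" "Suc (Suc p) \<in> {1..N}" using p1 pN by auto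
  have xyz: "x \<in> {1..N}" "y \<in> {1..N}" "z \<in> {1..N}" "x \<noteq> y" "x \<noteq> z" "y \<noteq> z"
    unfolding x_def y_def z_def using pm_range[OF pm] pm_inj[OF pm] inN by auto
  have distRL: "distinct RL"
  proof -
    have "distinct RP" by (auto simp: RP_def)
    moreover have "inj_on \<pi> (set RP)"
      using pm_inj[OF pm] RPpos by (auto simp: inj_on_def)
    ultimately show ?thesis by (simp add: RL_def distinct_map)
  qed
  have setRL: "set RL \<subseteq> {1..N} - {x,y,z}"
  proof
    fix r assume "r \<in> set RL"
    then obtain q where q: "q \<in> set RP" "r = \<pi> q" by (auto simp: RL_def)
    show "r \<in> {1..N} - {x,y,z}"
      using RPpos[OF q(1)] pm_range[OF pm] pm_inj[OF pm] inN unfolding q(2) x_def y_def z_def by auto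
  qed
  define \<pi>1 where "\<pi>1 = sw p \<pi>"
  define \<pi>2 where "\<pi>2 = sw (Suc p) \<pi>1"
  define \<pi>3 where "\<pi>3 = sw p \<pi>2"
  define \<pi>4 where "\<pi>4 = sw (Suc p) \<pi>3"
  define \<pi>5 where "\<pi>5 = sw p \<pi>4"
  have agree: "\<And>q. q \<in> set RP \<Longrightarrow> \<pi>1 q = \<pi> q \<and> \<pi>2 q = \<pi> q \<and> \<pi>3 q = \<pi> q \<and> \<pi>4 q = \<pi> q \<and> \<pi>5 q = \<pi> q"
    using RPpos by (simp add: \<pi>1_def \<pi>2_def \<pi>3_def \<pi>4_def \<pi>5_def sw_def)
  have vals: "\<pi>1 p = y" "\<pi>1 (Suc p) = x" "\<pi>1 (Suc (Suc p)) = z"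
             "\<pi>2 p = y" "\<pi>2 (Suc p) = z" "\<pi>2 (Suc (Suc p)) = x"
             "\<pi>3 p = z" "\<pi>3 (Suc p) = y" "\<pi>3 (Suc (Suc p)) = x"
             "\<pi>4 p = z" "\<pi>4 (Suc p) = x" "\<pi>4 (Suc (Suc p)) = y"
             "\<pi>5 p = x" "\<pi>5 (Suc p) = z" "\<pi>5 (Suc (Suc p)) = y"
    by (simp_all add: \<pi>1_def \<pi>2_def \<pi>3_def \<pi>4_def \<pi>5_def sw_def x_def y_def z_def)
  have st: "stp N \<pi> p = \<pi>1" "stp N \<pi>1 (Suc p) = \<pi>2" "stp N \<pi>2 p = \<pi>3" "stp N \<pi>3 (Suc p) = \<pi>4"
           "stp N \<pi>4 p = \<pi>5"
    using p1 pN by (simp_all add: stp_def \<pi>1_def \<pi>2_def \<pi>3_def \<pi>4_def \<pi>5_def)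
  define t where "t = ({x,y,z},False)"
  define X where "X = map (\<lambda>r. ({x,y,r},False)) RL"
  define Z where "Z = map (\<lambda>r. ({x,z,r},False)) RL"
  define Y where "Y = map (\<lambda>r. ({y,z,r},False)) RL"
  have w0: "wd N \<pi> p = t # X"
    using wd_p_form[of RP \<pi> \<pi> N p, OF _ c0] by (simp add: t_def X_def RL_def x_def y_def z_def)
  have w1: "wd N \<pi>1 (Suc p) = Z @ [t]"
    using wd_Sp_form[of RP \<pi>1 \<pi> N p, OF _ c1] agree vals by (simp add: t_def Z_def RL_def insert_commute)
  have w2: "wd N \<pi>2 p = t # Y"
    using wd_p_form[of RP \<pi>2 \<pi> N p, OF _ c0] agree vals by (simp add: t_def Y_def RL_def insert_commute)
  have w3: "wd N \<pi>3 (Suc p) = X @ [t]"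
    using wd_Sp_form[of RP \<pi>3 \<pi> N p, OF _ c1] agree vals by (simp add: t_def X_def RL_def insert_commute)
  have w4: "wd N \<pi>4 p = t # Z"
    using wd_p_form[of RP \<pi>4 \<pi> N p, OF _ c0] agree vals by (simp add: t_def Z_def RL_def insert_commute)
  have w5: "wd N \<pi>5 (Suc p) = Y @ [t]"
    using wd_Sp_form[of RP \<pi>5 \<pi> N p, OF _ c1] agree vals by (simp add: t_def Y_def RL_def insert_commute)
  have P: "Phi N \<pi> [(p,False),(Suc p,False),(p,False),(Suc p,True),(p,True),(Suc p,True)] =
           (t # X @ Z @ [t, t] @ Y) @ inv_word (Y @ [t, t] @ Z @ X @ [t])"
    by (simp add: st w0 w1 w2 w3 w4 w5 inv_word_def)
  have vt: "valid3 N {x,y,z}" by (rule valid3I) (use xyz in auto)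
  have tt: "eqv (G_rels N) [t, t] []" unfolding t_def by (rule G_sq[OF vt])
  have chain: "eqv (G_rels N) (t # X @ Z @ Y) (Y @ Z @ X @ [t])"
    unfolding t_def X_def Y_def Z_def by (rule tet_chain[OF xyz distRL setRL])
  have "eqv (G_rels N) (t # X @ Z @ [t, t] @ Y) (t # X @ Z @ Y)"
    using eqv_ctx[OF tt, of "t # X @ Z" Y] by simp
  also note chain
  also have "eqv (G_rels N) (Y @ Z @ X @ [t]) (Y @ [t, t] @ Z @ X @ [t])"
    using eqv_ctx[OF eqv_sym'[OF tt], of Y "Z @ X @ [t]"] by simp
  finally show ?thesis unfolding P by (rule eqv_rel_to_nil)
qed


definition Br :: "nat \<Rightarrow> (nat \<times> bool) list set" where
 "Br N = {[(p,False),(q,False),(p,True),(q,True)] | p q. 1 \<le> p \<and> 1 \<le> q \<and> p < N \<and> q < N \<and> (p + 2 \<le> q \<or> q + 2 \<le> p)}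
   \<union> {[(p,False),(Suc p,False),(p,False),(Suc p,True),(p,True),(Suc p,True)] | p. 1 \<le> p \<and> p + 2 \<le> N}"

lemma sw_comm: "p + 2 \<le> q \<or> q + 2 \<le> p \<Longrightarrow> sw p (sw q \<sigma>) = sw q (sw p \<sigma>)"
  by (rule ext) (auto simp: sw_def)

lemma far_rel:
  assumes pm: "pm N \<pi>" and h: "1 \<le> p" "1 \<le> q" "p < N" "q < N" "p + 2 \<le> q \<or> q + 2 \<le> p"
  shows "eqv (G_rels N) (Phi N \<pi> [(p,False),(q,False),(p,True),(q,True)]) [] \<and>
         endp N \<pi> [(p,False),(q,False),(p,True),(q,True)] = \<pi>"
proof -
  have c: "sw p (sw q \<sigma>) = sw q (sw p \<sigma>)" for \<sigma> using sw_comm h(5) by blast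
  have e1: "sw q (sw p (sw q (sw p \<pi>))) = \<pi>" using c by (metis sw_sw)
  have e2: "wd N (sw q (sw p \<pi>)) p = wd N (sw q \<pi>) p" using c by (metis wd_sw)
  have e3: "wd N (sw p (sw q (sw p \<pi>))) q = wd N \<pi> q" using c by (metis wd_sw sw_sw)
  have P: "Phi N \<pi> [(p,False),(q,False),(p,True),(q,True)] =
      (wd N \<pi> p @ wd N (sw p \<pi>) q) @ inv_word (wd N \<pi> q @ wd N (sw q \<pi>) p)"
    using h by (simp add: stp_def e2 e3)
  have E: "eqv (G_rels N) (wd N \<pi> p @ wd N (sw p \<pi>) q) (wd N \<pi> q @ wd N (sw q \<pi>) p)"
  proof (cases "p + 2 \<le> q")
    case True then show ?thesis using far_eq[OF pm h(1) True h(4)] by simp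
  next
    case False
    then have "q + 2 \<le> p" using h(5) by simp
    then show ?thesis using far_eq[OF pm h(2) _ h(3)] by (blast intro: eqv_sym')
  qed
  have A: "eqv (G_rels N) (Phi N \<pi> [(p,False),(q,False),(p,True),(q,True)]) []"
    unfolding P by (rule eqv_rel_to_nil[OF E])
  have B: "endp N \<pi> [(p,False),(q,False),(p,True),(q,True)] = \<pi>" using h e1 by (simp add: stp_def)
  show ?thesis using A B by simp
qed

lemma braid_endp:
  assumes "1 \<le> p" "p + 2 \<le> N"
  shows "endp N \<pi> [(p,False),(Suc p,False),(p,False),(Suc p,True),(p,True),(Suc p,True)] = \<pi>"
  using assms by (simp add: stp_def) (rule ext, simp add: sw_def)

lemma Br_rel:
  assumes "r \<in> Br N" "pm N \<pi>"
  shows "eqv (G_rels N) (Phi N \<pi> r) [] \<and> endp N \<pi> r = \<pi>"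
  using assms far_rel braid_eq braid_endp unfolding Br_def by auto

lemma Phi_eqv:
  "eqv (Br N) u v \<Longrightarrow> pm N \<pi> \<Longrightarrow> eqv (G_rels N) (Phi N \<pi> u) (Phi N \<pi> v) \<and> endp N \<pi> u = endp N \<pi> v"
proof (induction arbitrary: \<pi> rule: eqv.induct)
  case (eqv_refl u) then show ?case by (simp add: eqv_refl')
next
  case (eqv_sym u v) then show ?case by (simp add: eqv_sym')
next
  case (eqv_trans u v w) then show ?case by (metis eqv_trans')
next
  case (eqv_cancel u x b v)
  define \<pi>0 where "\<pi>0 = endp N \<pi> u"
  have mid: "eqv (G_rels N) ((if b then inv_word (wd N \<pi>0 x) else wd N \<pi>0 x) @
                             (if \<not> b then inv_word (wd N \<pi>0 x) else wd N \<pi>0 x)) []"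
    using eqv_cancel_word eqv_cancel_word' by (cases b) auto
  have "Phi N \<pi> (u @ [(x, b), (x, \<not> b)] @ v) = Phi N \<pi> u @
         ((if b then inv_word (wd N \<pi>0 x) else wd N \<pi>0 x) @ (if \<not> b then inv_word (wd N \<pi>0 x) else wd N \<pi>0 x)) @ Phi N \<pi>0 v"
    by (simp add: Phi_append endp_append \<pi>0_def)
  moreover have "Phi N \<pi> (u @ v) = Phi N \<pi> u @ [] @ Phi N \<pi>0 v" by (simp add: Phi_append \<pi>0_def)
  ultimately show ?case using eqv_ctx[OF mid, of "Phi N \<pi> u" "Phi N \<pi>0 v"]
    by (simp add: endp_append)
next
  case (eqv_rel r u v)
  define \<pi>0 where "\<pi>0 = endp N \<pi> u"
  have pm0: "pm N \<pi>0" using pm_endp eqv_rel.prems \<pi>0_def by blast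
  have R: "eqv (G_rels N) (Phi N \<pi>0 r) [] \<and> endp N \<pi>0 r = \<pi>0" by (rule Br_rel[OF eqv_rel.hyps pm0])
  have "Phi N \<pi> (u @ r @ v) = Phi N \<pi> u @ Phi N \<pi>0 r @ Phi N \<pi>0 v"
    using R by (simp add: Phi_append endp_append \<pi>0_def)
  moreover have "Phi N \<pi> (u @ v) = Phi N \<pi> u @ [] @ Phi N \<pi>0 v" by (simp add: Phi_append \<pi>0_def)
  ultimately show ?case using eqv_ctx[OF conjunct1[OF R], of "Phi N \<pi> u" "Phi N \<pi>0 v"] R
    by (simp add: endp_append \<pi>0_def)
qed


definition Bw :: "nat \<Rightarrow> nat \<Rightarrow> (nat \<times> bool) list" where
  "Bw i j = map (\<lambda>k. (k,True)) [i..<j-1] @ [(j-1,False),(j-1,False)] @ map (\<lambda>k. (k,False)) (rev [i..<j-1])"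

definition mv :: "nat \<Rightarrow> nat \<Rightarrow> nat \<Rightarrow> nat" where
  "mv i k = (\<lambda>t. if t < i \<or> k < t then t else if t = k then i else Suc t)"

lemma mv_id: "mv i i = id"
  by (rule ext) (simp add: mv_def)

lemma sw_mv: "i \<le> k \<Longrightarrow> sw k (mv i k) = mv i (Suc k)"
  by (rule ext) (auto simp: sw_def mv_def)

lemma stp_mv: "i \<le> k \<Longrightarrow> 1 \<le> k \<Longrightarrow> k < N \<Longrightarrow> stp N (mv i k) k = mv i (Suc k)"
  by (simp add: stp_def sw_mv)

lemma concat_single: "concat (map (\<lambda>k. [f k]) L) = map f L"
  by (induction L) auto

lemma c_alt: "c N i j = map (\<lambda>l. ({i,j,l},False)) (filter (\<lambda>l. l \<noteq> i) ([j+1..<N+1] @ [1..<j]))"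
  unfolding c_def a_def gen_def by (rule concat_single)

lemma wd_mv: assumes "1 \<le> i" "i \<le> k"
  shows "wd N (mv i k) k = c N i (Suc k)"
proof -
  have m1: "map (mv i k) [k+2..<N+1] = [k+2..<N+1]"
  proof (rule map_idI)
    fix x assume "x \<in> set [k+2..<N+1]"
    then have "k < x" by auto
    then show "mv i k x = x" by (simp add: mv_def)
  qed
  have f1: "filter (\<lambda>l. l \<noteq> i) [k+2..<N+1] = [k+2..<N+1]"
    by (rule filter_True) (use assms in auto)
  have s1: "[1..<k] = [1..<i] @ [i..<k]" by (rule upt_split) (use assms in auto)
  have s2: "[1..<Suc k] = [1..<i] @ i # [Suc i..<Suc k]"
  proof -
    have "[1..<Suc k] = [1..<i] @ [i..<Suc k]" by (rule upt_split) (use assms in auto)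
    moreover have "[i..<Suc k] = i # [Suc i..<Suc k]" using assms by (simp add: upt_conv_Cons)
    ultimately show ?thesis by simp
  qed
  have m2: "map (mv i k) [1..<i] = [1..<i]"
  proof (rule map_idI)
    fix x assume "x \<in> set [1..<i]"
    then have "x < i" by auto
    then show "mv i k x = x" by (simp add: mv_def)
  qed
  have m3: "map (mv i k) [i..<k] = [Suc i..<Suc k]"
  proof -
    have "map (mv i k) [i..<k] = map Suc [i..<k]"
    proof (rule map_cong[OF refl])
      fix x assume "x \<in> set [i..<k]"
      then have "i \<le> x" "x < k" by auto
      then show "mv i k x = Suc x" by (simp add: mv_def)
    qed
    then show ?thesis by (simp add: map_Suc_upt)
  qed
  have f2: "filter (\<lambda>l. l \<noteq> i) [1..<i] = [1..<i]" by (rule filter_True) auto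
  have f3: "filter (\<lambda>l. l \<noteq> i) [Suc i..<Suc k] = [Suc i..<Suc k]" by (rule filter_True) auto
  have mvk: "mv i k k = i" "mv i k (Suc k) = Suc k" using assms by (auto simp: mv_def)
  have L: "map (mv i k) (cyc N k) = [k+2..<N+1] @ [1..<i] @ [Suc i..<Suc k]"
    unfolding cyc_def map_append m1 s1 m2 m3 by simp
  have kk: "Suc k + 1 = k + 2" by simp
  have R: "filter (\<lambda>l. l \<noteq> i) ([Suc k+1..<N+1] @ [1..<Suc k]) = [k+2..<N+1] @ [1..<i] @ [Suc i..<Suc k]"
    unfolding kk filter_append f1 s2 f2 by (simp add: f3)
  have "map (mv i k) (cyc N k) = filter (\<lambda>l. l \<noteq> i) ([Suc k+1..<N+1] @ [1..<Suc k])"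
    using L R by simp
  then have "map (\<lambda>l. ({i, Suc k, l}, False)) (map (mv i k) (cyc N k)) =
        map (\<lambda>l. ({i, Suc k, l}, False)) (filter (\<lambda>l. l \<noteq> i) ([Suc k+1..<N+1] @ [1..<Suc k]))"
    by (rule arg_cong)
  then have "map (\<lambda>q. ({i, Suc k, mv i k q}, False)) (cyc N k) =
        map (\<lambda>l. ({i, Suc k, l}, False)) (filter (\<lambda>l. l \<noteq> i) ([Suc k+1..<N+1] @ [1..<Suc k]))"
    by (simp only: map_map o_def)
  then show ?thesis by (simp add: wd_def c_alt mvk)
qed

lemma first_half:
  assumes "1 \<le> i" "i \<le> k0" "k1 < N"
  shows "k0 \<le> k1 \<Longrightarrow> Phi N (mv i k0) (map (\<lambda>k. (k,True)) [k0..<k1] @ rest) =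
     concat (map (\<lambda>k. inv_word (c N i (Suc k))) [k0..<k1]) @ Phi N (mv i k1) rest \<and>
     endp N (mv i k0) (map (\<lambda>k. (k,True)) [k0..<k1] @ rest) = endp N (mv i k1) rest"
  using assms(3)
proof (induction k1 arbitrary: rest)
  case 0 then show ?case using assms by simp
next
  case (Suc k1)
  show ?case
  proof (cases "k0 \<le> k1")
    case False
    then have "k0 = Suc k1" using Suc.prems by simp
    then show ?thesis by simp
  next
    case True
    have IH: "Phi N (mv i k0) (map (\<lambda>k. (k,True)) [k0..<k1] @ ((k1,True) # rest)) =
     concat (map (\<lambda>k. inv_word (c N i (Suc k))) [k0..<k1]) @ Phi N (mv i k1) ((k1,True) # rest) \<and>
     endp N (mv i k0) (map (\<lambda>k. (k,True)) [k0..<k1] @ ((k1,True) # rest)) = endp N (mv i k1) ((k1,True) # rest)"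
      using Suc.IH[OF True] Suc.prems by simp
    have ik1: "i \<le> k1" "1 \<le> k1" "k1 < N" using True assms Suc.prems by auto
    show ?thesis using IH True stp_mv[OF ik1] wd_mv[OF assms(1) ik1(1)] by simp
  qed
qed

lemma second_half:
  assumes "1 \<le> i" "i \<le> k0" "k1 < N"
  shows "k0 \<le> k1 \<Longrightarrow> Phi N (mv i k1) (map (\<lambda>k. (k,False)) (rev [k0..<k1]) @ rest) =
     concat (map (\<lambda>k. c N i (Suc k)) (rev [k0..<k1])) @ Phi N (mv i k0) rest \<and>
     endp N (mv i k1) (map (\<lambda>k. (k,False)) (rev [k0..<k1]) @ rest) = endp N (mv i k0) rest"
  using assms(3)
proof (induction k1 arbitrary: rest)
  case 0 then show ?case using assms by simp
next
  case (Suc k1)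
  show ?case
  proof (cases "k0 \<le> k1")
    case False
    then have "k0 = Suc k1" using Suc.prems by simp
    then show ?thesis by simp
  next
    case True
    have IH: "Phi N (mv i k1) (map (\<lambda>k. (k,False)) (rev [k0..<k1]) @ rest) =
     concat (map (\<lambda>k. c N i (Suc k)) (rev [k0..<k1])) @ Phi N (mv i k0) rest \<and>
     endp N (mv i k1) (map (\<lambda>k. (k,False)) (rev [k0..<k1]) @ rest) = endp N (mv i k0) rest"
      using Suc.IH[OF True] Suc.prems by simp
    have ik1: "i \<le> k1" "1 \<le> k1" "k1 < N" using True assms Suc.prems by auto
    have e1: "mv i (Suc k1) = sw k1 (mv i k1)" using sw_mv[OF ik1(1)] by simp
    have e2: "stp N (mv i (Suc k1)) k1 = mv i k1" using e1 ik1 by (simp add: stp_def)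
    have e3: "wd N (mv i (Suc k1)) k1 = c N i (Suc k1)" using e1 wd_mv[OF assms(1) ik1(1)] by simp
    show ?thesis using IH True e2 e3 by simp
  qed
qed

lemma inv_word_concat: "inv_word (concat ws) = concat (map inv_word (rev ws))"
  by (induction ws) auto

lemma phi_Phi:
  assumes "1 \<le> i" "i < j" "j \<le> N"
  shows "Phi N id (Bw i j) = phi N (i,j) \<and> endp N id (Bw i j) = id"
proof -
  have j1: "i \<le> j - 1" "j - 1 < N" "1 \<le> j - 1" using assms by auto
  have F: "Phi N (mv i i) (map (\<lambda>k. (k,True)) [i..<j-1] @ rest) =
     concat (map (\<lambda>k. inv_word (c N i (Suc k))) [i..<j-1]) @ Phi N (mv i (j-1)) rest \<and>
     endp N (mv i i) (map (\<lambda>k. (k,True)) [i..<j-1] @ rest) = endp N (mv i (j-1)) rest" for rest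
    using first_half[OF assms(1) order_refl j1(2) j1(1)] .
  have S: "Phi N (mv i (j-1)) (map (\<lambda>k. (k,False)) (rev [i..<j-1]) @ []) =
     concat (map (\<lambda>k. c N i (Suc k)) (rev [i..<j-1])) @ Phi N (mv i i) [] \<and>
     endp N (mv i (j-1)) (map (\<lambda>k. (k,False)) (rev [i..<j-1]) @ []) = endp N (mv i i) []"
    using second_half[OF assms(1) order_refl j1(2) j1(1)] .
  have st1: "stp N (mv i (j-1)) (j-1) = mv i j" using stp_mv[OF j1(1) j1(3) j1(2)] assms by simp
  have swj: "mv i j = sw (j-1) (mv i (j-1))" using sw_mv[OF j1(1)] assms by simp
  have st2: "stp N (mv i j) (j-1) = mv i (j-1)" using swj j1 by (simp add: stp_def)
  have wd1: "wd N (mv i (j-1)) (j-1) = c N i j" using wd_mv[OF assms(1) j1(1)] assms by simp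
  have wd2: "wd N (mv i j) (j-1) = c N i j" using swj wd1 by simp
  have mid: "Phi N (mv i (j-1)) ([(j-1,False),(j-1,False)] @ rest) = c N i j @ c N i j @ Phi N (mv i (j-1)) rest \<and>
             endp N (mv i (j-1)) ([(j-1,False),(j-1,False)] @ rest) = endp N (mv i (j-1)) rest" for rest
    using st1 st2 wd1 wd2 by simp
  have M: "map (\<lambda>k. c N i (Suc k)) (rev [i..<j-1]) = map (c N i) (rev [i+1..<j])"
  proof -
    have "map Suc [i..<j-1] = [i+1..<j]" using assms by (simp add: map_Suc_upt)
    moreover have "map (\<lambda>k. c N i (Suc k)) (rev [i..<j-1]) = map (c N i) (rev (map Suc [i..<j-1]))"
      by (simp add: rev_map)
    ultimately show ?thesis by simp
  qed
  have MS: "map Suc [i..<j-1] = [i+1..<j]" using assms by (simp add: map_Suc_upt)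
  have MI: "concat (map (\<lambda>k. inv_word (c N i (Suc k))) [i..<j-1]) = inv_word (concat (map (c N i) (rev [i+1..<j])))"
  proof -
    have "inv_word (concat (map (c N i) (rev [i+1..<j]))) = concat (map (\<lambda>x. inv_word (c N i x)) [i+1..<j])"
      by (simp add: inv_word_concat rev_map o_def)
    moreover have "concat (map (\<lambda>k. inv_word (c N i (Suc k))) [i..<j-1]) = concat (map (\<lambda>x. inv_word (c N i x)) (map Suc [i..<j-1]))"
      by (simp only: map_map o_def)
    ultimately show ?thesis unfolding MS by simp
  qed
  have "Phi N id (Bw i j) = concat (map (\<lambda>k. inv_word (c N i (Suc k))) [i..<j-1]) @ c N i j @ c N i j @
          concat (map (\<lambda>k. c N i (Suc k)) (rev [i..<j-1]))"
    using F[of "[(j-1,False),(j-1,False)] @ map (\<lambda>k. (k,False)) (rev [i..<j-1])"] mid S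
    by (simp add: Bw_def mv_id)
  moreover have "endp N id (Bw i j) = id"
    using F[of "[(j-1,False),(j-1,False)] @ map (\<lambda>k. (k,False)) (rev [i..<j-1])"] mid S
    by (simp add: Bw_def mv_id)
  ultimately show ?thesis using M MI by (simp add: phi_def Let_def)
qed


fun red :: "('g \<times> bool) list \<Rightarrow> ('g \<times> bool) list" where
  "red [] = []"
| "red (e # w) = (case red w of [] \<Rightarrow> [e]
     | f # w' \<Rightarrow> if fst e = fst f \<and> snd e \<noteq> snd f then w' else e # f # w')"

lemma eqv_red: "eqv R w (red w)"
proof (induction w)
  case Nil then show ?case by (simp add: eqv_refl')
next
  case (Cons e w)
  have 1: "eqv R (e # w) (e # red w)" using eqv_ctx[OF Cons, of "[e]" "[]"] by simp
  show ?case
  proof (cases "red w")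
    case Nil then show ?thesis using 1 by simp
  next
    case (Cons f w')
    show ?thesis
    proof (cases "fst e = fst f \<and> snd e \<noteq> snd f")
      case True
      obtain x b where e: "e = (x,b)" by (cases e)
      have f: "f = (x, \<not> b)" using True e by (cases f) auto
      have "eqv R (e # f # w') w'" using eqv.eqv_cancel[of R "[]" x b w'] e f by simp
      then show ?thesis using 1 Cons True by (auto intro: eqv_trans')
    next
      case False then show ?thesis using 1 Cons by auto
    qed
  qed
qed

lemma eqv_by_red: "red u = red v \<Longrightarrow> eqv R u v"
  using eqv_red[of R u] eqv_red[of R v] by (metis eqv_sym' eqv_trans')

lemma eqv_conj: "eqv R u v \<Longrightarrow> red (l @ u @ r) = red x \<Longrightarrow> red (l @ v @ r) = red y \<Longrightarrow> eqv R x y"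
proof -
  assume a: "eqv R u v" "red (l @ u @ r) = red x" "red (l @ v @ r) = red y"
  have "eqv R x (l @ u @ r)" using eqv_by_red a(2) by metis
  also have "eqv R (l @ u @ r) (l @ v @ r)" by (rule eqv_ctx[OF a(1)])
  also have "eqv R (l @ v @ r) y" using eqv_by_red a(3) by metis
  finally show ?thesis .
qed

section \<open>Basic braid identities\<close>

lemma Br_far: "1 \<le> p \<Longrightarrow> 1 \<le> q \<Longrightarrow> p < N \<Longrightarrow> q < N \<Longrightarrow> p + 2 \<le> q \<or> q + 2 \<le> p \<Longrightarrow>
   eqv (Br N) [(p,False),(q,False)] [(q,False),(p,False)]"
  by (rule eqv_of_rel) (auto simp: Br_def inv_word_def)

lemma Br_braid: "1 \<le> p \<Longrightarrow> p + 2 \<le> N \<Longrightarrow>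
   eqv (Br N) [(p,False),(Suc p,False),(p,False)] [(Suc p,False),(p,False),(Suc p,False)]"
  by (rule eqv_of_rel) (auto simp: Br_def inv_word_def)

lemma comm_signs:
  assumes "eqv R [(p,False),(q,False)] [(q,False),(p,False)]" and pq: "p \<noteq> q"
  shows "eqv R [(p,s),(q,t)] [(q,t),(p,s)]"
proof -
  have A: "eqv R [(p,True),(q,False)] [(q,False),(p,True)]"
    by (rule eqv_sym', rule eqv_conj[OF assms(1), of "[(p,True)]" "[(p,True)]"]) (use pq in simp_all)
  have B: "eqv R [(p,False),(q,True)] [(q,True),(p,False)]"
    by (rule eqv_sym', rule eqv_conj[OF assms(1), of "[(q,True)]" "[(q,True)]"]) (use pq in simp_all)
  have C: "eqv R [(p,True),(q,True)] [(q,True),(p,True)]"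
    by (rule eqv_conj[OF assms(1), of "[(q,True),(p,True)]" "[(p,True),(q,True)]"]) (use pq in simp_all)
  show ?thesis using assms A B C by (cases s; cases t) auto
qed

definition farp :: "nat \<Rightarrow> nat \<Rightarrow> nat \<Rightarrow> bool" where
  "farp N p q \<longleftrightarrow> 1 \<le> p \<and> 1 \<le> q \<and> p < N \<and> q < N \<and> (p + 2 \<le> q \<or> q + 2 \<le> p)"

lemma Br_far_any: "farp N p q \<Longrightarrow> eqv (Br N) [(p,s),(q,t)] [(q,t),(p,s)]"
  by (rule comm_signs, rule Br_far) (auto simp: farp_def)

lemma comm_far_lists:
  assumes "\<And>e f. e \<in> set u \<Longrightarrow> f \<in> set v \<Longrightarrow> farp N (fst e) (fst f)"
  shows "eqv (Br N) (u @ v) (v @ u)"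
  by (rule comm_lists) (metis assms Br_far_any prod.collapse)


definition io :: "nat \<Rightarrow> nat \<Rightarrow> (nat \<times> bool) list" where
  "io m p = (if Suc p < m then [(p,False)] else if m \<le> p then [(Suc p,False)] else [(p,True),(Suc p,False),(p,False)])"

lemma Br_rel_far: "farp N p q \<Longrightarrow> [(p,False),(q,False),(p,True),(q,True)] \<in> Br N"
  by (auto simp: Br_def farp_def)

lemma Br_rel_braid: "1 \<le> p \<Longrightarrow> p + 2 \<le> N \<Longrightarrow> [(p,False),(Suc p,False),(p,False),(Suc p,True),(p,True),(Suc p,True)] \<in> Br N"
  by (auto simp: Br_def)

lemma io_far_case:
  assumes "farp (N - 1) p q" "1 \<le> m" "m \<le> N"
  shows "eqv (Br N) (word_map (io m) [(p,False),(q,False),(p,True),(q,True)]) []"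
proof -
  have f: "1 \<le> p" "1 \<le> q" "p < N - 1" "q < N - 1" "p + 2 \<le> q \<or> q + 2 \<le> p"
    using assms(1) by (auto simp: farp_def)
  consider (A) "Suc p \<noteq> m" "Suc q \<noteq> m" | (B) "Suc p = m" | (C) "Suc q = m" by blast
  then show ?thesis
  proof cases
    case A
    define p' where "p' = (if Suc p < m then p else Suc p)"
    define q' where "q' = (if Suc q < m then q else Suc q)"
    have io: "io m p = [(p',False)]" "io m q = [(q',False)]"
      using A by (auto simp: io_def p'_def q'_def)
    have "farp N p' q'" using f A unfolding farp_def p'_def q'_def by auto
    then have "[(p',False),(q',False),(p',True),(q',True)] \<in> Br N" by (rule Br_rel_far)
    then show ?thesis using io by (simp add: inv_word_def eqv_rel0)
  next
    case B
    define q' where "q' = (if Suc q < m then q else Suc q)"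
    have io: "io m p = [(p,True),(Suc p,False),(p,False)]" "io m q = [(q',False)]"
      using B f by (auto simp: io_def q'_def)
    have fq: "farp N p q'" "farp N (Suc p) q'" using f B unfolding farp_def q'_def by auto
    have c: "eqv (Br N) ([(p,True),(Suc p,False),(p,False)] @ [(q',False)]) ([(q',False)] @ [(p,True),(Suc p,False),(p,False)])"
      by (rule comm_far_lists) (use fq in auto)
    have ne: "q' \<noteq> p" "q' \<noteq> Suc p" using fq by (auto simp: farp_def)
    show ?thesis
      by (rule eqv_conj[OF c, of "[]" "[(p,True),(Suc p,True),(p,False),(q',True)]"])
         (use io ne in \<open>simp_all add: inv_word_def\<close>)
  next
    case C
    define p' where "p' = (if Suc p < m then p else Suc p)"
    have io: "io m q = [(q,True),(Suc q,False),(q,False)]" "io m p = [(p',False)]"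
      using C f by (auto simp: io_def p'_def)
    have fp: "farp N q p'" "farp N (Suc q) p'" using f C unfolding farp_def p'_def by auto
    have c: "eqv (Br N) ([(p',False)] @ [(q,True),(Suc q,False),(q,False)]) ([(q,True),(Suc q,False),(q,False)] @ [(p',False)])"
      by (rule comm_far_lists) (use fp in \<open>auto simp: farp_def\<close>)
    have ne: "p' \<noteq> q" "p' \<noteq> Suc q" using fp by (auto simp: farp_def)
    show ?thesis
      by (rule eqv_conj[OF c, of "[]" "[(p',True),(q,True),(Suc q,True),(q,False)]"])
         (use io ne in \<open>simp_all add: inv_word_def\<close>)
  qed
qed

lemma io_braid_case:
  assumes p: "1 \<le> p" "p + 2 \<le> N - 1" and m: "1 \<le> m" "m \<le> N"
  shows "eqv (Br N) (word_map (io m) [(p,False),(Suc p,False),(p,False),(Suc p,True),(p,True),(Suc p,True)]) []"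
proof -
  consider (a) "Suc (Suc p) < m" | (b) "m \<le> p" | (c) "Suc p = m" | (d) "Suc (Suc p) = m" by linarith
  then show ?thesis
  proof cases
    case a
    have io: "io m p = [(p,False)]" "io m (Suc p) = [(Suc p,False)]" using a by (auto simp: io_def)
    show ?thesis using io Br_rel_braid[of p N] p by (simp add: inv_word_def eqv_rel0)
  next
    case b
    have io: "io m p = [(Suc p,False)]" "io m (Suc p) = [(Suc (Suc p),False)]" using b by (auto simp: io_def)
    show ?thesis using io Br_rel_braid[of "Suc p" N] p by (simp add: inv_word_def eqv_rel0)
  next
    case c
    have io: "io m p = [(p,True),(Suc p,False),(p,False)]" "io m (Suc p) = [(Suc (Suc p),False)]"
      using c by (auto simp: io_def)
    have f1: "farp N p (Suc (Suc p))" using p by (auto simp: farp_def)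
    have s1: "eqv (Br N) [(p,True),(Suc p,False),(p,False),(Suc (Suc p),False),(p,True),(Suc p,False),(p,False)]
                         [(p,True),(Suc p,False),(Suc (Suc p),False),(Suc p,False),(p,False)]"
      by (rule eqv_conj[OF Br_far_any[OF f1, of False False], of "[(p,True),(Suc p,False)]" "[(p,True),(Suc p,False),(p,False)]"]) simp_all
    have s2: "eqv (Br N) [(p,True),(Suc p,False),(Suc (Suc p),False),(Suc p,False),(p,False)]
                         [(p,True),(Suc (Suc p),False),(Suc p,False),(Suc (Suc p),False),(p,False)]"
      using eqv_ctx[OF Br_braid[of "Suc p" N], of "[(p,True)]" "[(p,False)]"] p by simp
    have s3: "eqv (Br N) [(p,True),(Suc (Suc p),False),(Suc p,False),(Suc (Suc p),False),(p,False)]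
                         [(Suc (Suc p),False),(p,True),(Suc p,False),(Suc (Suc p),False),(p,False)]"
      using eqv_ctx[OF Br_far_any[OF f1, of True False], of "[]" "[(Suc p,False),(Suc (Suc p),False),(p,False)]"] by simp
    have s4: "eqv (Br N) [(Suc (Suc p),False),(p,True),(Suc p,False),(Suc (Suc p),False),(p,False)]
                         [(Suc (Suc p),False),(p,True),(Suc p,False),(p,False),(Suc (Suc p),False)]"
      using eqv_ctx[OF eqv_sym'[OF Br_far_any[OF f1, of False False]], of "[(Suc (Suc p),False),(p,True),(Suc p,False)]" "[]"] by simp
    have E: "eqv (Br N) ([(p,True),(Suc p,False),(p,False)] @ [(Suc (Suc p),False)] @ [(p,True),(Suc p,False),(p,False)])
                        ([(Suc (Suc p),False)] @ [(p,True),(Suc p,False),(p,False)] @ [(Suc (Suc p),False)])"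
      using eqv_trans'[OF s1 eqv_trans'[OF s2 eqv_trans'[OF s3 s4]]] by simp
    show ?thesis using eqv_rel_to_nil[OF E] io by (simp add: inv_word_def)
  next
    case d
    have io: "io m p = [(p,False)]" "io m (Suc p) = [(Suc p,True),(Suc (Suc p),False),(Suc p,False)]"
      using d by (auto simp: io_def)
    have f1: "farp N p (Suc (Suc p))" using p by (auto simp: farp_def)
    have br1: "eqv (Br N) [(Suc p,False),(Suc (Suc p),False),(Suc p,False)] [(Suc (Suc p),False),(Suc p,False),(Suc (Suc p),False)]"
      using Br_braid[of "Suc p" N] p by simp
    have br0: "eqv (Br N) [(p,False),(Suc p,False),(p,False)] [(Suc p,False),(p,False),(Suc p,False)]"
      using Br_braid[of p N] p by simp
    have B: "eqv (Br N) [(Suc (Suc p),False),(Suc p,False),(Suc (Suc p),True)] [(Suc p,True),(Suc (Suc p),False),(Suc p,False)]"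
      by (rule eqv_conj[OF br1, of "[(Suc p,True)]" "[(Suc (Suc p),True)]"]) simp_all
    have L1: "eqv (Br N) [(p,False),(Suc p,True),(Suc (Suc p),False),(Suc p,False),(p,False)]
                         [(p,False),(Suc (Suc p),False),(Suc p,False),(Suc (Suc p),True),(p,False)]"
      using eqv_ctx[OF eqv_sym'[OF B], of "[(p,False)]" "[(p,False)]"] by simp
    have L2: "eqv (Br N) [(p,False),(Suc (Suc p),False),(Suc p,False),(Suc (Suc p),True),(p,False)]
                         [(Suc (Suc p),False),(p,False),(Suc p,False),(Suc (Suc p),True),(p,False)]"
      using eqv_ctx[OF Br_far_any[OF f1, of False False], of "[]" "[(Suc p,False),(Suc (Suc p),True),(p,False)]"] by simp
    have L3: "eqv (Br N) [(Suc (Suc p),False),(p,False),(Suc p,False),(Suc (Suc p),True),(p,False)]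
                         [(Suc (Suc p),False),(p,False),(Suc p,False),(p,False),(Suc (Suc p),True)]"
      using eqv_ctx[OF eqv_sym'[OF Br_far_any[OF f1, of False True]], of "[(Suc (Suc p),False),(p,False),(Suc p,False)]" "[]"] by simp
    have L4: "eqv (Br N) [(Suc (Suc p),False),(p,False),(Suc p,False),(p,False),(Suc (Suc p),True)]
                         [(Suc (Suc p),False),(Suc p,False),(p,False),(Suc p,False),(Suc (Suc p),True)]"
      using eqv_ctx[OF br0, of "[(Suc (Suc p),False)]" "[(Suc (Suc p),True)]"] by simp
    have R1: "eqv (Br N) ([(Suc p,True),(Suc (Suc p),False),(Suc p,False)] @ [(p,False)] @ [(Suc p,True),(Suc (Suc p),False),(Suc p,False)])
                         ([(Suc (Suc p),False),(Suc p,False),(Suc (Suc p),True)] @ [(p,False)] @ [(Suc (Suc p),False),(Suc p,False),(Suc (Suc p),True)])"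
      using eqv_app[OF eqv_sym'[OF B] eqv_app[OF eqv_refl'[of "Br N" "[(p,False)]"] eqv_sym'[OF B]]] by simp
    have R2: "eqv (Br N) [(Suc (Suc p),False),(Suc p,False),(Suc (Suc p),True),(p,False),(Suc (Suc p),False),(Suc p,False),(Suc (Suc p),True)]
                         [(Suc (Suc p),False),(Suc p,False),(p,False),(Suc p,False),(Suc (Suc p),True)]"
      by (rule eqv_conj[OF eqv_sym'[OF Br_far_any[OF f1, of False True]], of "[(Suc (Suc p),False),(Suc p,False)]" "[(Suc (Suc p),False),(Suc p,False),(Suc (Suc p),True)]"]) simp_all
    have E: "eqv (Br N) ([(p,False)] @ [(Suc p,True),(Suc (Suc p),False),(Suc p,False)] @ [(p,False)])
                        ([(Suc p,True),(Suc (Suc p),False),(Suc p,False)] @ [(p,False)] @ [(Suc p,True),(Suc (Suc p),False),(Suc p,False)])"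
    proof -
      have "eqv (Br N) ([(p,False)] @ [(Suc p,True),(Suc (Suc p),False),(Suc p,False)] @ [(p,False)])
                        [(Suc (Suc p),False),(Suc p,False),(p,False),(Suc p,False),(Suc (Suc p),True)]"
        using eqv_trans'[OF L1 eqv_trans'[OF L2 eqv_trans'[OF L3 L4]]] by simp
      moreover have "eqv (Br N) ([(Suc p,True),(Suc (Suc p),False),(Suc p,False)] @ [(p,False)] @ [(Suc p,True),(Suc (Suc p),False),(Suc p,False)])
                        [(Suc (Suc p),False),(Suc p,False),(p,False),(Suc p,False),(Suc (Suc p),True)]"
        using eqv_trans'[OF R1[simplified] R2] by simp
      ultimately show ?thesis by (blast intro: eqv_trans' eqv_sym')
    qed
    show ?thesis using eqv_rel_to_nil[OF E] io by (simp add: inv_word_def)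
  qed
qed

lemma io_rel:
  assumes "r \<in> Br (N - 1)" "1 \<le> m" "m \<le> N"
  shows "eqv (Br N) (word_map (io m) r) []"
proof -
  from assms(1) consider (far) p q where "r = [(p,False),(q,False),(p,True),(q,True)]" "farp (N - 1) p q"
    | (br) p where "r = [(p,False),(Suc p,False),(p,False),(Suc p,True),(p,True),(Suc p,True)]" "1 \<le> p" "p + 2 \<le> N - 1"
    unfolding Br_def farp_def by blast
  then show ?thesis
  proof cases
    case far then show ?thesis using io_far_case assms by simp
  next
    case br then show ?thesis using io_braid_case assms by simp
  qed
qed


definition ins :: "nat \<Rightarrow> nat \<Rightarrow> nat" where
  "ins m t = (if t < m then t else Suc t)"

lemma word_map_letters:
  assumes "\<forall>k \<in> set L. f k = [(g k, False)]"
  shows "word_map f (map (\<lambda>k. (k,s)) L) = map (\<lambda>k. (g k, s)) L"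
  using assms by (induction L) (auto simp: inv_word_def)

lemma map_Suc_pair: "map (\<lambda>k. (Suc k, s)) [x..<y] = map (\<lambda>k. (k, s)) [Suc x..<Suc y]"
proof -
  have "map (\<lambda>k. (Suc k, s)) [x..<y] = map (\<lambda>k. (k, s)) (map Suc [x..<y])" by simp
  then show ?thesis by (simp only: map_Suc_upt)
qed

lemma map_Suc_pair_rev: "map (\<lambda>k. (Suc k, s)) (rev [x..<y]) = map (\<lambda>k. (k, s)) (rev [Suc x..<Suc y])"
  using map_Suc_pair[of s x y] by (metis rev_map)

lemma io_Bw:
  assumes ij: "1 \<le> i" "i < j" "j \<le> N - 1" and m: "1 \<le> m" "m \<le> N"
  shows "eqv (Br N) (word_map (io m) (Bw i j)) (Bw (ins m i) (ins m j))"
proof -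
  have BwE: "word_map (io m) (Bw i j) = word_map (io m) (map (\<lambda>k. (k,True)) [i..<j-1]) @ io m (j-1) @ io m (j-1) @
              word_map (io m) (map (\<lambda>k. (k,False)) (rev [i..<j-1]))"
    by (simp add: Bw_def)
  consider (A) "m \<le> i" | (B) "j < m" | (C) "m = j" | (D) "i < m" "m < j" by linarith
  then show ?thesis
  proof cases
    case A
    have h: "\<forall>k \<in> set [i..<j-1]. io m k = [(Suc k, False)]" using A by (auto simp: io_def)
    have h': "\<forall>k \<in> set (rev [i..<j-1]). io m k = [(Suc k, False)]" using h by simp
    have mid: "io m (j-1) = [(j,False)]" using A ij by (auto simp: io_def)
    have "word_map (io m) (Bw i j) = Bw (Suc i) (Suc j)"
      unfolding BwE word_map_letters[OF h, where s=True] word_map_letters[OF h', where s=False] mid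
      using ij by (simp add: Bw_def map_Suc_pair map_Suc_pair_rev)
    moreover have "ins m i = Suc i" "ins m j = Suc j" using A ij by (auto simp: ins_def)
    ultimately show ?thesis by (simp add: eqv_refl')
  next
    case B
    have h: "\<forall>k \<in> set [i..<j-1]. io m k = [(k, False)]" using B by (auto simp: io_def)
    have h': "\<forall>k \<in> set (rev [i..<j-1]). io m k = [(k, False)]" using h by simp
    have mid: "io m (j-1) = [(j-1,False)]" using B ij by (auto simp: io_def)
    have "word_map (io m) (Bw i j) = Bw i j"
      unfolding BwE word_map_letters[OF h, where s=True] word_map_letters[OF h', where s=False] mid
      using ij by (simp add: Bw_def)
    moreover have "ins m i = i" "ins m j = j" using B ij by (auto simp: ins_def)
    ultimately show ?thesis by (simp add: eqv_refl')
  next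
    case C
    have h: "\<forall>k \<in> set [i..<j-1]. io m k = [(k, False)]" using C by (auto simp: io_def)
    have h': "\<forall>k \<in> set (rev [i..<j-1]). io m k = [(k, False)]" using h by simp
    have mid: "io m (j-1) = [(j-1,True),(j,False),(j-1,False)]" using C ij by (auto simp: io_def)
    have ins: "ins m i = i" "ins m j = Suc j" using C ij by (auto simp: ins_def)
    have up: "[i..<j] = [i..<j-1] @ [j-1]" using ij upt_Suc_append[of i "j-1"] by simp
    have L: "word_map (io m) (Bw i j) = map (\<lambda>k. (k,True)) [i..<j-1] @
              [(j-1,True),(j,False),(j-1,False),(j-1,True),(j,False),(j-1,False)] @ map (\<lambda>k. (k,False)) (rev [i..<j-1])"
      unfolding BwE word_map_letters[OF h, where s=True] word_map_letters[OF h', where s=False] mid by simp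
    have R: "Bw (ins m i) (ins m j) = map (\<lambda>k. (k,True)) [i..<j-1] @
              [(j-1,True),(j,False),(j,False),(j-1,False)] @ map (\<lambda>k. (k,False)) (rev [i..<j-1])"
      unfolding ins Bw_def using up by simp
    have M: "eqv (Br N) [(j-1,True),(j,False),(j-1,False),(j-1,True),(j,False),(j-1,False)] [(j-1,True),(j,False),(j,False),(j-1,False)]"
      by (rule eqv_by_red) (use ij in simp)
    show ?thesis unfolding L R by (rule eqv_ctx[OF M])
  next
    case D
    define U where "U = map (\<lambda>k. (k,True)) [i..<m-1]"
    define U' where "U' = map (\<lambda>k. (k,False)) (rev [i..<m-1])"
    define Mid where "Mid = map (\<lambda>k. (k,True)) [Suc m..<j] @ [(j,False),(j,False)] @ map (\<lambda>k. (k,False)) (rev [Suc m..<j])"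
    have sp: "[i..<j-1] = [i..<m-1] @ [m-1] @ [m..<j-1]"
    proof -
      have "[i..<j-1] = [i..<m-1] @ [m-1..<j-1]" by (rule upt_split) (use D ij in auto)
      moreover have "[m-1..<j-1] = (m-1) # [m..<j-1]" using D ij by (simp add: upt_conv_Cons)
      ultimately show ?thesis by simp
    qed
    have sp2: "[i..<j] = [i..<m-1] @ [m-1, m] @ [Suc m..<j]"
    proof -
      have "[i..<j] = [i..<m-1] @ [m-1..<j]" by (rule upt_split) (use D ij in auto)
      moreover have "[m-1..<j] = (m-1) # m # [Suc m..<j]" using D ij by (simp add: upt_conv_Cons)
      ultimately show ?thesis by simp
    qed
    have h1: "\<forall>k \<in> set [i..<m-1]. io m k = [(k, False)]" by (auto simp: io_def)
    have h1': "\<forall>k \<in> set (rev [i..<m-1]). io m k = [(k, False)]" using h1 by simp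
    have h2: "\<forall>k \<in> set [m..<j-1]. io m k = [(Suc k, False)]" by (auto simp: io_def)
    have h2': "\<forall>k \<in> set (rev [m..<j-1]). io m k = [(Suc k, False)]" using h2 by simp
    have iom: "io m (m-1) = [(m-1,True),(m,False),(m-1,False)]" using D ij by (auto simp: io_def)
    have mid: "io m (j-1) = [(j,False)]" using D ij by (auto simp: io_def)
    have iom': "io m (m - Suc 0) = [(m - Suc 0,True),(m,False),(m - Suc 0,False)]" using iom by simp
    have jj: "Suc (j - 1) = j" using D by simp
    have L: "word_map (io m) (Bw i j) = U @ [(m-1,True),(m,True)] @ [(m-1,False)] @ Mid @ [(m-1,True)] @ [(m,False),(m-1,False)] @ U'"
      unfolding BwE sp rev_append map_append word_map_append word_map_letters[OF h1, where s=True] word_map_letters[OF h1', where s=False]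
        word_map_letters[OF h2, where s=True] word_map_letters[OF h2', where s=False] mid map_Suc_pair map_Suc_pair_rev jj iom
      by (simp add: iom' U_def U'_def Mid_def inv_word_def)
    have R: "Bw (ins m i) (ins m j) = U @ [(m-1,True),(m,True)] @ Mid @ [(m,False),(m-1,False)] @ U'"
    proof -
      have ins: "ins m i = i" "ins m j = Suc j" using D ij by (auto simp: ins_def)
      show ?thesis unfolding ins Bw_def using sp2 by (simp add: U_def U'_def Mid_def)
    qed
    have fa: "\<And>e f. e \<in> set [(m-1,False)] \<Longrightarrow> f \<in> set Mid \<Longrightarrow> farp N (fst e) (fst f)"
      using D ij by (auto simp: Mid_def farp_def)
    have c: "eqv (Br N) ([(m-1,False)] @ Mid) (Mid @ [(m-1,False)])" by (rule comm_far_lists[OF fa])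
    have c2: "eqv (Br N) ([(m-1,False)] @ Mid @ [(m-1,True)]) Mid"
    proof -
      have "eqv (Br N) (([(m-1,False)] @ Mid) @ [(m-1,True)]) ((Mid @ [(m-1,False)]) @ [(m-1,True)])"
        using eqv_ctx[OF c, of "[]" "[(m-1,True)]"] by simp
      moreover have "eqv (Br N) (Mid @ [(m-1,False),(m-1,True)]) Mid"
        using eqv.eqv_cancel[of "Br N" Mid "m-1" False "[]"] by simp
      ultimately show ?thesis by (simp add: eqv_trans')
    qed
    show ?thesis unfolding L R
      using eqv_ctx[OF c2, of "U @ [(m-1,True),(m,True)]" "[(m,False),(m-1,False)] @ U'"] by simp
  qed
qed


definition pbrel :: "nat \<Rightarrow> nat \<Rightarrow> nat \<Rightarrow> nat \<Rightarrow> (nat \<times> nat) word" where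
  "pbrel r s i j = inv_word (gen (r, s)) @ gen (i, j) @ gen (r, s) @ inv_word (pb_rhs r s i j)"

lemma braid_pair:
  assumes BR: "eqv R [(p,False),(q,False),(p,False)] [(q,False),(p,False),(q,False)]" and pq: "p \<noteq> q"
  shows "eqv R [(p,False),(q,False),(q,False),(p,False),(q,False),(q,False)] [(q,False),(q,False),(p,False),(q,False),(q,False),(p,False)]"
    and "eqv R [(q,True),(p,True),(q,False),(q,False),(p,False),(q,False)] [(p,False),(p,False)]"
proof -
  note BRs = eqv_sym'[OF BR]
  have E_0: "eqv (R) [(q,False),(p,False),(q,True)] [(p,True),(q,False),(p,False)]"
    by (rule eqv_conj[OF BR, of "[(p,True)]" "[(q,True)]"]) (use assms in simp_all)
  note E = E_0
  note Es = eqv_sym'[OF E]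
  have D_0: "eqv (R) [(p,False),(q,False),(q,False),(p,False),(q,False),(q,False)] [(p,False),(q,False),(p,False),(q,False),(p,False),(q,False)]"
    by (rule eqv_conj[OF BRs, of "[(p,False),(q,False)]" "[(q,False)]"]) (use assms in simp_all)
  have D_1: "eqv (R) [(p,False),(q,False),(p,False),(q,False),(p,False),(q,False)] [(q,False),(p,False),(q,False),(q,False),(p,False),(q,False)]"
    by (rule eqv_conj[OF BR, of "[]" "[(q,False),(p,False),(q,False)]"]) (use assms in simp_all)
  have D_2: "eqv (R) [(q,False),(p,False),(q,False),(q,False),(p,False),(q,False)] [(q,False),(p,False),(q,False),(p,False),(q,False),(p,False)]"
    by (rule eqv_conj[OF BRs, of "[(q,False),(p,False),(q,False)]" "[]"]) (use assms in simp_all)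
  have D_3: "eqv (R) [(q,False),(p,False),(q,False),(p,False),(q,False),(p,False)] [(q,False),(q,False),(p,False),(q,False),(q,False),(p,False)]"
    by (rule eqv_conj[OF BR, of "[(q,False)]" "[(q,False),(p,False)]"]) (use assms in simp_all)
  have D: "eqv (R) [(p,False),(q,False),(q,False),(p,False),(q,False),(q,False)] [(q,False),(q,False),(p,False),(q,False),(q,False),(p,False)]"
    using D_0 D_1 D_2 D_3 by (meson eqv_trans_calc)
  have Pg_0: "eqv (R) [(q,True),(p,True),(q,False),(q,False),(p,False),(q,False)] [(q,True),(p,True),(q,False),(p,False),(q,False),(p,False)]"
    by (rule eqv_conj[OF BRs, of "[(q,True),(p,True),(q,False)]" "[]"]) (use assms in simp_all)
  have Pg_1: "eqv (R) [(q,True),(p,True),(q,False),(p,False),(q,False),(p,False)] [(p,False),(p,False)]"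
    by (rule eqv_conj[OF Es, of "[(q,True)]" "[(q,False),(p,False)]"]) (use assms in simp_all)
  have Pg: "eqv (R) [(q,True),(p,True),(q,False),(q,False),(p,False),(q,False)] [(p,False),(p,False)]"
    using Pg_0 Pg_1 by (meson eqv_trans_calc)

  show "eqv R [(p,False),(q,False),(q,False),(p,False),(q,False),(q,False)] [(q,False),(q,False),(p,False),(q,False),(q,False),(p,False)]" by (rule D)
  show "eqv R [(q,True),(p,True),(q,False),(q,False),(p,False),(q,False)] [(p,False),(p,False)]" by (rule Pg)
qed

lemma base_3:
  shows "eqv (Br 3) (word_map (case_prod Bw) (pbrel 1 2 2 3)) []"
    and "eqv (Br 3) (word_map (case_prod Bw) (pbrel 1 2 1 3)) []"
proof -
  have BRab3: "eqv (Br 3) [(1,False),(2,False),(1,False)] [(2,False),(1,False),(2,False)]"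
    using Br_braid[of 1 3] by (simp add: numeral_2_eq_2)
  note Dab3 = braid_pair(1)[OF BRab3, simplified]
  note DabS3 = eqv_sym'[OF Dab3]
  have K1_0: "eqv (Br 3) [(1,True),(1,True),(2,False),(2,False),(1,False),(1,False),(1,True),(2,False),(2,False),(1,False),(2,True),(2,True),(1,True),(2,True),(2,True),(1,False)] []"
    by (rule eqv_conj[OF DabS3, of "[(1,True),(1,True)]" "[(2,True),(2,True),(1,True),(2,True),(2,True),(1,False)]"]) (simp_all)
  note K1 = K1_0
  have K2_0: "eqv (Br 3) [(1,True),(1,True),(1,True),(2,False),(2,False),(1,False),(1,False),(1,False),(1,True),(2,False),(2,False),(1,False),(2,False),(2,False),(1,True),(2,True),(2,True),(1,False),(2,True),(2,True),(1,True),(2,True),(2,True),(1,False)] [(1,True),(1,True),(1,True),(2,False),(2,False),(1,False),(2,False),(2,False),(1,False),(1,False),(2,True),(2,True),(1,True),(2,True),(2,True),(1,False)]"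
    by (rule eqv_conj[OF Dab3, of "[(1,True),(1,True),(1,True),(2,False),(2,False),(1,False)]" "[(1,True),(2,True),(2,True),(1,False),(2,True),(2,True),(1,True),(2,True),(2,True),(1,False)]"]) (simp_all)
  have K2_1: "eqv (Br 3) [(1,True),(1,True),(1,True),(2,False),(2,False),(1,False),(2,False),(2,False),(1,False),(1,False),(2,True),(2,True),(1,True),(2,True),(2,True),(1,False)] [(1,True),(1,True),(2,False),(2,False),(1,False),(2,False),(2,False),(1,False),(2,True),(2,True),(1,True),(2,True),(2,True),(1,False)]"
    by (rule eqv_conj[OF DabS3, of "[(1,True),(1,True),(1,True)]" "[(1,False),(2,True),(2,True),(1,True),(2,True),(2,True),(1,False)]"]) (simp_all)
  have K2_2: "eqv (Br 3) [(1,True),(1,True),(2,False),(2,False),(1,False),(2,False),(2,False),(1,False),(2,True),(2,True),(1,True),(2,True),(2,True),(1,False)] []"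
    by (rule eqv_conj[OF DabS3, of "[(1,True),(1,True)]" "[(2,True),(2,True),(1,True),(2,True),(2,True),(1,False)]"]) (simp_all)
  have K2: "eqv (Br 3) [(1,True),(1,True),(1,True),(2,False),(2,False),(1,False),(1,False),(1,False),(1,True),(2,False),(2,False),(1,False),(2,False),(2,False),(1,True),(2,True),(2,True),(1,False),(2,True),(2,True),(1,True),(2,True),(2,True),(1,False)] []"
    using K2_0 K2_1 K2_2 by (meson eqv_trans_calc)

  have w1: "word_map (case_prod Bw) (pbrel 1 2 2 3) = [(1,True),(1,True),(2,False),(2,False),(1,False),(1,False),(1,True),(2,False),(2,False),(1,False),(2,True),(2,True),(1,True),(2,True),(2,True),(1,False)]"
    by (simp add: pbrel_def pb_rhs_def Bw_def gen_def inv_word_def upt_rec)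
  have w2: "word_map (case_prod Bw) (pbrel 1 2 1 3) = [(1,True),(1,True),(1,True),(2,False),(2,False),(1,False),(1,False),(1,False),(1,True),(2,False),(2,False),(1,False),(2,False),(2,False),(1,True),(2,True),(2,True),(1,False),(2,True),(2,True),(1,True),(2,True),(2,True),(1,False)]"
    by (simp add: pbrel_def pb_rhs_def Bw_def gen_def inv_word_def upt_rec)
  show "eqv (Br 3) (word_map (case_prod Bw) (pbrel 1 2 2 3)) []" using K1 w1 by simp
  show "eqv (Br 3) (word_map (case_prod Bw) (pbrel 1 2 1 3)) []" using K2 w2 by simp
qed

lemma base_4:
  shows "eqv (Br 4) (word_map (case_prod Bw) (pbrel 1 2 3 4)) []"
    and "eqv (Br 4) (word_map (case_prod Bw) (pbrel 2 3 1 4)) []"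
    and "eqv (Br 4) (word_map (case_prod Bw) (pbrel 1 3 2 4)) []"
proof -
  have BRab4: "eqv (Br 4) [(1,False),(2,False),(1,False)] [(2,False),(1,False),(2,False)]"
    using Br_braid[of 1 4] by (simp add: numeral_2_eq_2)
  have BRbc4: "eqv (Br 4) [(2,False),(3,False),(2,False)] [(3,False),(2,False),(3,False)]"
    using Br_braid[of 2 4] by (simp add: numeral_eq_Suc)
  note Dbc = braid_pair(1)[OF BRbc4, simplified]
  note Pbc = braid_pair(2)[OF BRbc4, simplified]
  note PbcS = eqv_sym'[OF Pbc]
  note PbcI = eqv_inv[OF Pbc]
  note Pba = braid_pair(2)[OF eqv_sym'[OF BRab4], simplified]
  note PbaS = eqv_sym'[OF Pba]
  have f13: "farp 4 1 3" "farp 4 3 1" by (auto simp: farp_def)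
  have CCAA: "eqv (Br 4) ([(3,False),(3,False)] @ [(1,False),(1,False)]) ([(1,False),(1,False)] @ [(3,False),(3,False)])"
    by (rule comm_far_lists) (use f13 in auto)
  have ACC: "eqv (Br 4) ([(1,False)] @ [(3,False),(3,False)]) ([(3,False),(3,False)] @ [(1,False)])"
    by (rule comm_far_lists) (use f13 in auto)
  have FCca: "eqv (Br 4) [(3,False),(1,False)] [(1,False),(3,False)]" by (rule Br_far_any[OF f13(2)])
  have FCAc: "eqv (Br 4) [(1,True),(3,False)] [(3,False),(1,True)]" by (rule Br_far_any[OF f13(1)])
  have K3_0: "eqv (Br 4) [(1,True),(1,True),(3,False),(3,False),(1,False),(1,False),(3,True),(3,True)] []"
    by (rule eqv_conj[OF CCAA, of "[(1,True),(1,True)]" "[(3,True),(3,True)]"]) (simp_all)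
  note K3 = K3_0
  have K4_0: "eqv (Br 4) [(2,True),(2,True),(1,True),(2,True),(3,False),(3,False),(2,False),(1,False),(2,False),(2,False),(1,True),(2,True),(3,True),(3,True),(2,False),(1,False)] [(2,True),(2,True),(1,True),(2,True),(3,False),(3,False),(1,False),(1,False),(3,True),(3,True),(2,False),(1,False)]"
    by (rule eqv_conj[OF PbaS, of "[(2,True),(2,True),(1,True),(2,True),(3,False),(3,False),(2,False),(1,False)]" "[(1,True),(2,True),(3,True),(3,True),(2,False),(1,False)]"]) (simp_all)
  have K4_1: "eqv (Br 4) [(2,True),(2,True),(1,True),(2,True),(3,False),(3,False),(1,False),(1,False),(3,True),(3,True),(2,False),(1,False)] [(2,True),(2,True),(1,True),(2,True),(1,False),(1,False),(2,False),(1,False)]"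
    by (rule eqv_conj[OF CCAA, of "[(2,True),(2,True),(1,True),(2,True)]" "[(3,True),(3,True),(2,False),(1,False)]"]) (simp_all)
  have K4_2: "eqv (Br 4) [(2,True),(2,True),(1,True),(2,True),(1,False),(1,False),(2,False),(1,False)] []"
    by (rule eqv_conj[OF Pba, of "[(2,True),(2,True)]" "[]"]) (simp_all)
  have K4: "eqv (Br 4) [(2,True),(2,True),(1,True),(2,True),(3,False),(3,False),(2,False),(1,False),(2,False),(2,False),(1,True),(2,True),(3,True),(3,True),(2,False),(1,False)] []"
    using K4_0 K4_1 K4_2 by (meson eqv_trans_calc)
  note K4w = K4
  have T4_0: "eqv (Br 4) [(1,True),(2,True),(3,False),(3,False),(2,False),(1,False),(2,False),(2,False)] [(2,False),(2,False),(1,True),(2,True),(3,False),(3,False),(2,False),(1,False)]"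
    by (rule eqv_conj[OF K4w, of "[(2,False),(2,False)]" "[(1,True),(2,True),(3,False),(3,False),(2,False),(1,False)]"]) (simp_all)
  note T4 = T4_0
  note T4S = eqv_sym'[OF T4]
  have Q_0: "eqv (Br 4) [(1,True),(2,False),(2,False),(1,False),(1,True),(2,True),(3,False),(3,False),(2,False),(1,False),(3,False),(3,False),(1,True),(2,True),(3,True),(3,True),(2,False),(1,False),(3,True),(3,True)] [(1,True),(2,False),(3,False),(3,False),(2,False),(3,False),(3,False),(2,True),(3,True),(3,True),(2,False),(1,False),(3,True),(3,True)]"
    by (rule eqv_conj[OF ACC, of "[(1,True),(2,False),(3,False),(3,False),(2,False)]" "[(1,True),(2,True),(3,True),(3,True),(2,False),(1,False),(3,True),(3,True)]"]) (simp_all)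
  have Q_1: "eqv (Br 4) [(1,True),(2,False),(3,False),(3,False),(2,False),(3,False),(3,False),(2,True),(3,True),(3,True),(2,False),(1,False),(3,True),(3,True)] [(1,True),(3,False),(3,False),(2,False),(2,False),(1,False),(3,True),(3,True)]"
    by (rule eqv_conj[OF Dbc, of "[(1,True)]" "[(2,True),(3,True),(3,True),(2,False),(1,False),(3,True),(3,True)]"]) (simp_all)
  have Q_2: "eqv (Br 4) [(1,True),(3,False),(3,False),(2,False),(2,False),(1,False),(3,True),(3,True)] [(1,True),(3,False),(2,True),(3,False),(3,False),(2,False),(3,False),(1,False),(3,True),(3,True)]"
    by (rule eqv_conj[OF PbcS, of "[(1,True),(3,False),(3,False)]" "[(1,False),(3,True),(3,True)]"]) (simp_all)
  have Q_3: "eqv (Br 4) [(1,True),(3,False),(2,True),(3,False),(3,False),(2,False),(3,False),(1,False),(3,True),(3,True)] [(1,True),(3,False),(2,True),(3,False),(3,False),(2,False),(1,False),(3,True)]"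
    by (rule eqv_conj[OF FCca, of "[(1,True),(3,False),(2,True),(3,False),(3,False),(2,False)]" "[(3,True),(3,True)]"]) (simp_all)
  have Q_4: "eqv (Br 4) [(1,True),(3,False),(2,True),(3,False),(3,False),(2,False),(1,False),(3,True)] [(3,False),(1,True),(2,True),(3,False),(3,False),(2,False),(1,False),(3,True)]"
    by (rule eqv_conj[OF FCAc, of "[]" "[(2,True),(3,False),(3,False),(2,False),(1,False),(3,True)]"]) (simp_all)
  have Q: "eqv (Br 4) [(1,True),(2,False),(2,False),(1,False),(1,True),(2,True),(3,False),(3,False),(2,False),(1,False),(3,False),(3,False),(1,True),(2,True),(3,True),(3,True),(2,False),(1,False),(3,True),(3,True)] [(3,False),(1,True),(2,True),(3,False),(3,False),(2,False),(1,False),(3,True)]"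
    using Q_0 Q_1 Q_2 Q_3 Q_4 by (meson eqv_trans_calc)
  note Qi = eqv_inv[OF Q]
  have K5_0: "eqv (Br 4) [(1,True),(2,True),(2,True),(1,False),(2,True),(3,False),(3,False),(2,False),(1,True),(2,False),(2,False),(1,False),(1,True),(2,True),(3,False),(3,False),(2,False),(1,False),(3,False),(3,False),(1,True),(2,True),(3,True),(3,True),(2,False),(1,False),(3,True),(3,True),(2,True),(3,True),(3,True),(2,False),(3,False),(3,False),(1,True),(2,True),(3,False),(3,False),(2,False),(1,False),(3,True),(3,True),(1,True),(2,True),(3,True),(3,True),(2,False),(1,False)] [(1,True),(2,True),(2,True),(1,False),(2,True),(3,False),(3,False),(2,False),(3,False),(1,True),(2,True),(3,False),(3,False),(2,False),(1,False),(3,True),(2,True),(3,True),(3,True),(2,False),(3,False),(3,False),(1,True),(2,True),(3,False),(3,False),(2,False),(1,False),(3,True),(3,True),(1,True),(2,True),(3,True),(3,True),(2,False),(1,False)]"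
    by (rule eqv_conj[OF Q, of "[(1,True),(2,True),(2,True),(1,False),(2,True),(3,False),(3,False),(2,False)]" "[(2,True),(3,True),(3,True),(2,False),(3,False),(3,False),(1,True),(2,True),(3,False),(3,False),(2,False),(1,False),(3,True),(3,True),(1,True),(2,True),(3,True),(3,True),(2,False),(1,False),(1,True),(2,True),(2,True),(1,False),(1,True),(2,False),(2,False),(1,False)]"]) (simp_all)
  have K5_1: "eqv (Br 4) [(1,True),(2,True),(2,True),(1,False),(2,True),(3,False),(3,False),(2,False),(3,False),(1,True),(2,True),(3,False),(3,False),(2,False),(1,False),(3,True),(2,True),(3,True),(3,True),(2,False),(3,False),(3,False),(1,True),(2,True),(3,False),(3,False),(2,False),(1,False),(3,True),(3,True),(1,True),(2,True),(3,True),(3,True),(2,False),(1,False)] [(1,True),(2,True),(2,True),(1,False),(2,True),(3,False),(3,False),(2,False),(3,False),(1,True),(2,True),(3,False),(3,False),(2,False),(1,False),(3,True),(2,True),(3,True),(3,True),(2,False),(3,False),(1,True),(2,True),(3,True),(3,True),(2,False),(1,False),(3,True),(1,True),(2,False),(2,False),(1,False)]"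
    by (rule eqv_conj[OF Qi, of "[(1,True),(2,True),(2,True),(1,False),(2,True),(3,False),(3,False),(2,False),(3,False),(1,True),(2,True),(3,False),(3,False),(2,False),(1,False),(3,True),(2,True),(3,True),(3,True),(2,False)]" "[(1,True),(2,False),(2,False),(1,False)]"]) (simp_all)
  have K5_2: "eqv (Br 4) [(1,True),(2,True),(2,True),(1,False),(2,True),(3,False),(3,False),(2,False),(3,False),(1,True),(2,True),(3,False),(3,False),(2,False),(1,False),(3,True),(2,True),(3,True),(3,True),(2,False),(3,False),(1,True),(2,True),(3,True),(3,True),(2,False),(1,False),(3,True),(1,True),(2,False),(2,False),(1,False)] [(1,True),(2,True),(2,True),(1,False),(3,False),(2,False),(2,False),(1,True),(2,True),(3,False),(3,False),(2,False),(1,False),(3,True),(2,True),(3,True),(3,True),(2,False),(3,False),(1,True),(2,True),(3,True),(3,True),(2,False),(1,False),(3,True),(1,True),(2,False),(2,False),(1,False)]"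
    by (rule eqv_conj[OF Pbc, of "[(1,True),(2,True),(2,True),(1,False),(3,False)]" "[(1,True),(2,True),(3,False),(3,False),(2,False),(1,False),(3,True),(2,True),(3,True),(3,True),(2,False),(3,False),(1,True),(2,True),(3,True),(3,True),(2,False),(1,False),(3,True),(1,True),(2,False),(2,False),(1,False)]"]) (simp_all)
  have K5_3: "eqv (Br 4) [(1,True),(2,True),(2,True),(1,False),(3,False),(2,False),(2,False),(1,True),(2,True),(3,False),(3,False),(2,False),(1,False),(3,True),(2,True),(3,True),(3,True),(2,False),(3,False),(1,True),(2,True),(3,True),(3,True),(2,False),(1,False),(3,True),(1,True),(2,False),(2,False),(1,False)] [(1,True),(2,True),(2,True),(1,False),(3,False),(2,False),(2,False),(1,True),(2,True),(3,False),(3,False),(2,False),(1,False),(2,True),(2,True),(1,True),(2,True),(3,True),(3,True),(2,False),(1,False),(3,True),(1,True),(2,False),(2,False),(1,False)]"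
    by (rule eqv_conj[OF PbcI, of "[(1,True),(2,True),(2,True),(1,False),(3,False),(2,False),(2,False),(1,True),(2,True),(3,False),(3,False),(2,False),(1,False)]" "[(1,True),(2,True),(3,True),(3,True),(2,False),(1,False),(3,True),(1,True),(2,False),(2,False),(1,False)]"]) (simp_all)
  have K5_4: "eqv (Br 4) [(1,True),(2,True),(2,True),(1,False),(3,False),(2,False),(2,False),(1,True),(2,True),(3,False),(3,False),(2,False),(1,False),(2,True),(2,True),(1,True),(2,True),(3,True),(3,True),(2,False),(1,False),(3,True),(1,True),(2,False),(2,False),(1,False)] []"
    by (rule eqv_conj[OF T4S, of "[(1,True),(2,True),(2,True),(1,False),(3,False)]" "[(2,True),(2,True),(1,True),(2,True),(3,True),(3,True),(2,False),(1,False),(3,True),(1,True),(2,False),(2,False),(1,False)]"]) (simp_all)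
  have K5: "eqv (Br 4) [(1,True),(2,True),(2,True),(1,False),(2,True),(3,False),(3,False),(2,False),(1,True),(2,False),(2,False),(1,False),(1,True),(2,True),(3,False),(3,False),(2,False),(1,False),(3,False),(3,False),(1,True),(2,True),(3,True),(3,True),(2,False),(1,False),(3,True),(3,True),(2,True),(3,True),(3,True),(2,False),(3,False),(3,False),(1,True),(2,True),(3,False),(3,False),(2,False),(1,False),(3,True),(3,True),(1,True),(2,True),(3,True),(3,True),(2,False),(1,False)] []"
    using K5_0 K5_1 K5_2 K5_3 K5_4 by (meson eqv_trans_calc)

  have w3: "word_map (case_prod Bw) (pbrel 1 2 3 4) = [(1,True),(1,True),(3,False),(3,False),(1,False),(1,False),(3,True),(3,True)]"
    by (simp add: pbrel_def pb_rhs_def Bw_def gen_def inv_word_def upt_rec)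
  have w4: "word_map (case_prod Bw) (pbrel 2 3 1 4) = [(2,True),(2,True),(1,True),(2,True),(3,False),(3,False),(2,False),(1,False),(2,False),(2,False),(1,True),(2,True),(3,True),(3,True),(2,False),(1,False)]"
    by (simp add: pbrel_def pb_rhs_def Bw_def gen_def inv_word_def upt_rec)
  have w5: "word_map (case_prod Bw) (pbrel 1 3 2 4) = [(1,True),(2,True),(2,True),(1,False),(2,True),(3,False),(3,False),(2,False),(1,True),(2,False),(2,False),(1,False),(1,True),(2,True),(3,False),(3,False),(2,False),(1,False),(3,False),(3,False),(1,True),(2,True),(3,True),(3,True),(2,False),(1,False),(3,True),(3,True),(2,True),(3,True),(3,True),(2,False),(3,False),(3,False),(1,True),(2,True),(3,False),(3,False),(2,False),(1,False),(3,True),(3,True),(1,True),(2,True),(3,True),(3,True),(2,False),(1,False)]"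
    by (simp add: pbrel_def pb_rhs_def Bw_def gen_def inv_word_def upt_rec)
  show "eqv (Br 4) (word_map (case_prod Bw) (pbrel 1 2 3 4)) []" using K3 w3 by simp
  show "eqv (Br 4) (word_map (case_prod Bw) (pbrel 2 3 1 4)) []" using K4 w4 by simp
  show "eqv (Br 4) (word_map (case_prod Bw) (pbrel 1 3 2 4)) []" using K5 w5 by simp
qed


definition pbvalid :: "nat \<Rightarrow> nat \<Rightarrow> nat \<Rightarrow> nat \<Rightarrow> nat \<Rightarrow> bool" where
  "pbvalid N r s i j \<longleftrightarrow> 1 \<le> r \<and> r < s \<and> s \<le> N \<and> 1 \<le> i \<and> i < j \<and> j \<le> N \<and> pb_cond r s i j"

lemma PB_rels_eq: "PB_rels N = {pbrel r s i j | r s i j. pbvalid N r s i j}"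
  by (auto simp: PB_rels_def pbrel_def pbvalid_def)

lemma base_enum:
  assumes v: "pbvalid N r s i j" and cov: "{1..N} \<subseteq> {r,s,i,j}"
  shows "(N = 3 \<and> (r,s,i,j) \<in> {(1,2,2,3),(1,2,1,3)}) \<or> (N = 4 \<and> (r,s,i,j) \<in> {(1,2,3,4),(2,3,1,4),(1,3,2,4)})"
proof -
  have "card {1..N} \<le> card {r,s,i,j}" by (rule card_mono[OF _ cov]) simp
  moreover have "card {r,s,i,j} \<le> 4" using card_length[of "[r,s,i,j]"] by simp
  ultimately have N4: "N \<le> 4" by simp
  have b: "1 \<le> r" "r < s" "s \<le> N" "1 \<le> i" "i < j" "j \<le> N" "pb_cond r s i j" using v by (auto simp: pbvalid_def)
  have pc: "s < i \<or> (i < r \<and> s < j) \<or> s = i \<or> (i = r \<and> s < j) \<or> (r < i \<and> i < s \<and> s < j)"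
    using b(7) by (simp add: pb_cond_def)
  have N: "N = 2 \<or> N = 3 \<or> N = 4" using N4 b by linarith
  then consider "N = 2" | "N = 3" | "N = 4" by blast
  then show ?thesis
  proof cases
    case 1
    then have "r = 1" "s = 2" "i = 1" "j = 2" using b by linarith+
    then show ?thesis using pc by simp
  next
    case 2
    have c2: "2 \<in> {r,s,i,j}" using subsetD[OF cov, of 2] 2 by simp
    have c3: "3 \<in> {r,s,i,j}" using subsetD[OF cov, of 3] 2 by simp
    have rs: "(r,s) \<in> {(1,2),(1,3),(2,3)}" using b 2 by auto
    have ij: "(i,j) \<in> {(1,2),(1,3),(2,3)}" using b 2 by auto
    from rs ij show ?thesis
      apply (simp only: insert_iff empty_iff prod.inject)
      apply (elim disjE conjE)
      using c2 c3 pc 2 by simp_all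
  next
    case 3
    have c1: "1 \<in> {r,s,i,j}" using subsetD[OF cov, of 1] 3 by simp
    have c2: "2 \<in> {r,s,i,j}" using subsetD[OF cov, of 2] 3 by simp
    have c3: "3 \<in> {r,s,i,j}" using subsetD[OF cov, of 3] 3 by simp
    have c4: "4 \<in> {r,s,i,j}" using subsetD[OF cov, of 4] 3 by simp
    have rs: "(r,s) \<in> {(1,2),(1,3),(1,4),(2,3),(2,4),(3,4)}" using b 3 by auto
    have ij: "(i,j) \<in> {(1,2),(1,3),(1,4),(2,3),(2,4),(3,4)}" using b 3 by auto
    from rs ij show ?thesis
      apply (simp only: insert_iff empty_iff prod.inject)
      apply (elim disjE conjE)
      using c1 c2 c3 c4 pc 3 by simp_all
  qed
qed

lemma ins_less[simp]: "ins m x < ins m y \<longleftrightarrow> x < y" by (auto simp: ins_def)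
lemma ins_eq[simp]: "ins m x = ins m y \<longleftrightarrow> x = y" by (auto simp: ins_def)

definition rl :: "nat \<Rightarrow> nat \<times> nat \<Rightarrow> (nat \<times> nat) word" where
  "rl m = (\<lambda>(x,y). gen (ins m x, ins m y))"

lemma pb_rhs_relabel: "pb_rhs (ins m r) (ins m s) (ins m i) (ins m j) = word_map (rl m) (pb_rhs r s i j)"
  by (simp add: pb_rhs_def Let_def rl_def)

lemma pbrel_relabel: "pbrel (ins m r) (ins m s) (ins m i) (ins m j) = word_map (rl m) (pbrel r s i j)"
  by (simp add: pbrel_def pb_rhs_relabel rl_def)

lemma pb_cond_mono:
  assumes "\<And>x y. x \<in> {r,s,i,j} \<Longrightarrow> y \<in> {r,s,i,j} \<Longrightarrow> (f x < f y \<longleftrightarrow> x < y) \<and> (f x = f y \<longleftrightarrow> x = y)"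
  shows "pb_cond (f r) (f s) (f i) (f j) \<longleftrightarrow> pb_cond r s i j"
proof -
  have h: "f s < f i \<longleftrightarrow> s < i" "f i < f r \<longleftrightarrow> i < r" "f s < f j \<longleftrightarrow> s < j" "f s = f i \<longleftrightarrow> s = i"
     "f i = f r \<longleftrightarrow> i = r" "f r < f i \<longleftrightarrow> r < i" "f i < f s \<longleftrightarrow> i < s"
    using assms by simp_all
  show ?thesis unfolding pb_cond_def h ..
qed

lemma fst_inv_word: "fst ` set (inv_word w) = fst ` set w"
  unfolding inv_word_def by (force simp: image_iff)

lemma pb_letters:
  assumes "pbvalid N r s i j" "(x, b) \<in> set (pbrel r s i j)"
  shows "1 \<le> fst x \<and> fst x < snd x \<and> snd x \<le> N"
proof -
  have v: "1 \<le> r" "r < s" "s \<le> N" "1 \<le> i" "i < j" "j \<le> N" "pb_cond r s i j" using assms(1) by (auto simp: pbvalid_def)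
  have "fst ` set (pbrel r s i j) = {(r,s),(i,j)} \<union> fst ` set (pb_rhs r s i j)"
    by (auto simp: pbrel_def gen_def fst_inv_word[of "[((r,s),False)]", simplified] image_Un fst_inv_word)
  moreover have "x \<in> fst ` set (pbrel r s i j)" using assms(2) by force
  ultimately have "x \<in> {(r,s),(i,j)} \<union> fst ` set (pb_rhs r s i j)" by simp
  moreover have "fst ` set (pb_rhs r s i j) \<subseteq> {(i,j),(r,j),(s,j)}"
    by (auto simp: pb_rhs_def Let_def gen_def inv_word_def)
  moreover have "s = i \<or> (i = r \<and> s < j) \<or> (r < i \<and> i < s \<and> s < j) \<Longrightarrow> r < j \<and> s < j" using v by auto
  moreover have "fst ` set (pb_rhs r s i j) \<subseteq> {(i,j)} \<or> (s = i \<or> (i = r \<and> s < j) \<or> (r < i \<and> i < s \<and> s < j))"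
    using v(7) unfolding pb_cond_def by (auto simp: pb_rhs_def Let_def gen_def inv_word_def)
  ultimately show ?thesis using v by auto
qed

lemma ins_sh: "t \<noteq> m \<Longrightarrow> ins m (sh m t) = t" by (auto simp: ins_def sh_def)
lemma sh_mono: "x \<noteq> m \<Longrightarrow> y \<noteq> m \<Longrightarrow> (sh m x < sh m y \<longleftrightarrow> x < y) \<and> (sh m x = sh m y \<longleftrightarrow> x = y)"
  by (auto simp: sh_def)

lemma birman_Br: "pbvalid N r s i j \<Longrightarrow> eqv (Br N) (word_map (case_prod Bw) (pbrel r s i j)) []"
proof (induction N arbitrary: r s i j)
  case 0 then show ?case by (auto simp: pbvalid_def)
next
  case (Suc N)
  show ?case
  proof (cases "{1..Suc N} \<subseteq> {r,s,i,j}")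
    case True
    from base_enum[OF Suc.prems True] show ?thesis
    proof
      assume h: "Suc N = 3 \<and> (r,s,i,j) \<in> {(1,2,2,3),(1,2,1,3)}"
      then have "Br (Suc N) = Br 3" by simp
      then show ?thesis using h base_3 by auto
    next
      assume h: "Suc N = 4 \<and> (r,s,i,j) \<in> {(1,2,3,4),(2,3,1,4),(1,3,2,4)}"
      then have "Br (Suc N) = Br 4" by simp
      then show ?thesis using h base_4 by auto
    qed
  next
    case False
    then obtain m where m: "m \<in> {1..Suc N}" "m \<notin> {r,s,i,j}" by blast
    define r' where "r' = sh m r"
    define s' where "s' = sh m s"
    define i' where "i' = sh m i"
    define j' where "j' = sh m j"
    have v: "1 \<le> r" "r < s" "s \<le> Suc N" "1 \<le> i" "i < j" "j \<le> Suc N" "pb_cond r s i j"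
      using Suc.prems by (auto simp: pbvalid_def)
    have mm: "r \<noteq> m" "s \<noteq> m" "i \<noteq> m" "j \<noteq> m" using m by auto
    have pc: "pb_cond r' s' i' j'"
      unfolding r'_def s'_def i'_def j'_def
      by (subst pb_cond_mono) (use sh_mono mm v(7) in auto)
    have v': "pbvalid N r' s' i' j'"
      unfolding pbvalid_def using v mm m pc unfolding r'_def s'_def i'_def j'_def sh_def by auto
    have IH: "eqv (Br N) (word_map (case_prod Bw) (pbrel r' s' i' j')) []" by (rule Suc.IH[OF v'])
    have eqr: "pbrel r s i j = word_map (rl m) (pbrel r' s' i' j')"
      using pbrel_relabel[of m r' s' i' j'] ins_sh mm unfolding r'_def s'_def i'_def j'_def by simp
    have c1: "word_map (case_prod Bw) (pbrel r s i j) = word_map (\<lambda>x. Bw (ins m (fst x)) (ins m (snd x))) (pbrel r' s' i' j')"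
      unfolding eqr word_map_comp by (simp add: rl_def case_prod_beta)
    have c2: "eqv (Br (Suc N)) (word_map (\<lambda>x. Bw (ins m (fst x)) (ins m (snd x))) (pbrel r' s' i' j'))
                                (word_map (\<lambda>x. word_map (io m) (Bw (fst x) (snd x))) (pbrel r' s' i' j'))"
    proof (rule eqv_word_map_cong)
      fix x b assume "(x, b) \<in> set (pbrel r' s' i' j')"
      then have "1 \<le> fst x \<and> fst x < snd x \<and> snd x \<le> N" by (rule pb_letters[OF v'])
      then show "eqv (Br (Suc N)) (Bw (ins m (fst x)) (ins m (snd x))) (word_map (io m) (Bw (fst x) (snd x)))"
        using io_Bw[of "fst x" "snd x" "Suc N" m] m by (auto intro: eqv_sym')
    qed
    have c3: "word_map (\<lambda>x. word_map (io m) (Bw (fst x) (snd x))) (pbrel r' s' i' j') =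
              word_map (io m) (word_map (case_prod Bw) (pbrel r' s' i' j'))"
      unfolding word_map_comp by (simp add: case_prod_beta)
    have c4: "eqv (Br (Suc N)) (word_map (io m) (word_map (case_prod Bw) (pbrel r' s' i' j'))) (word_map (io m) [])"
      by (rule eqv_hom[OF _ IH]) (use io_rel m in auto)
    show ?thesis using c1 c2 c3 c4 by (metis eqv_trans' word_map_Nil)
  qed
qed


lemma word_map_cong_eq: "(\<And>x b. (x,b) \<in> set w \<Longrightarrow> f x = g x) \<Longrightarrow> word_map f w = word_map g w"
proof (induction w)
  case Nil then show ?case by simp
next
  case (Cons e w)
  obtain x b where e: "e = (x,b)" by (cases e)
  have "(x,b) \<in> set (e # w)" using e by simp
  then have fx: "f x = g x" by (rule Cons.prems)
  have "word_map f w = word_map g w" using Cons by auto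
  then show ?case using fx e by simp
qed

lemma Phi_word_map:
  "(\<And>x b. (x,b) \<in> set w \<Longrightarrow> endp N id (g x) = id) \<Longrightarrow>
   Phi N id (word_map g w) = word_map (\<lambda>x. Phi N id (g x)) w \<and> endp N id (word_map g w) = id"
proof (induction w)
  case Nil then show ?case by simp
next
  case (Cons e w)
  obtain x b where e: "e = (x,b)" by (cases e)
  have "(x,b) \<in> set (e # w)" using e by simp
  then have ex: "endp N id (g x) = id" by (rule Cons.prems)
  have IH: "Phi N id (word_map g w) = word_map (\<lambda>x. Phi N id (g x)) w \<and> endp N id (word_map g w) = id"
  proof (rule Cons.IH)
    fix y c assume "(y,c) \<in> set w"
    then have "(y,c) \<in> set (e # w)" by simp
    then show "endp N id (g y) = id" by (rule Cons.prems)
  qed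
  have inv: "Phi N id (inv_word (g x)) = inv_word (Phi N id (g x)) \<and> endp N id (inv_word (g x)) = id"
    using Phi_inv[of N id "g x"] ex by simp
  show ?case
  proof (cases b)
    case True
    then show ?thesis using e IH inv by (simp add: Phi_append endp_append id_def)
  next
    case False
    then show ?thesis using e IH ex by (simp add: Phi_append endp_append id_def)
  qed
qed

lemma pm_id: "pm N id" by (simp add: pm_def)

lemma PB_G_rel:
  assumes "r \<in> PB_rels N"
  shows "eqv (G_rels N) (word_map (phi N) r) []"
proof -
  obtain r0 s0 i0 j0 where r: "r = pbrel r0 s0 i0 j0" and v: "pbvalid N r0 s0 i0 j0"
    using assms by (auto simp: PB_rels_eq)
  have let1: "\<And>x b. (x,b) \<in> set r \<Longrightarrow> 1 \<le> fst x \<and> fst x < snd x \<and> snd x \<le> N"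
    using pb_letters[OF v] r by blast
  have e1: "word_map (phi N) r = word_map (\<lambda>x. Phi N id (case_prod Bw x)) r"
  proof (rule word_map_cong_eq)
    fix x b assume "(x,b) \<in> set r"
    then have h: "1 \<le> fst x" "fst x < snd x" "snd x \<le> N" using let1 by auto
    show "phi N x = Phi N id (case_prod Bw x)"
      using phi_Phi[OF h] by (simp add: case_prod_beta)
  qed
  have e2: "Phi N id (word_map (case_prod Bw) r) = word_map (\<lambda>x. Phi N id (case_prod Bw x)) r"
  proof -
    have "\<And>x b. (x,b) \<in> set r \<Longrightarrow> endp N id (case_prod Bw x) = id"
    proof -
      fix x b assume "(x,b) \<in> set r"
      then have h: "1 \<le> fst x" "fst x < snd x" "snd x \<le> N" using let1 by auto
      show "endp N id (case_prod Bw x) = id" using phi_Phi[OF h] by (simp add: case_prod_beta)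
    qed
    then show ?thesis using Phi_word_map by blast
  qed
  have B: "eqv (Br N) (word_map (case_prod Bw) r) []" using birman_Br[OF v] r by simp
  have "eqv (G_rels N) (Phi N id (word_map (case_prod Bw) r)) (Phi N id [])"
    using Phi_eqv[OF B pm_id] by simp
  then show ?thesis using e1 e2 by simp
qed

lemma PB_to_G: "eqv (PB_rels N) u v \<Longrightarrow> eqv (G_rels N) (word_map (phi N) u) (word_map (phi N) v)"
  by (rule eqv_hom[OF PB_G_rel])


lemma shfilt: "map (sh m) (filter (\<lambda>l. l \<noteq> m) [x..<y]) = [(if x \<le> m then x else x - 1)..<(if y \<le> m then y else y - 1)]"
proof (induction y)
  case 0 then show ?case by simp
next
  case (Suc y)
  show ?case
  proof (cases "x \<le> y")
    case False
    then have L: "[x..<Suc y] = []" by simp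
    have R: "[(if x \<le> m then x else x - 1)..<(if Suc y \<le> m then Suc y else Suc y - 1)] = []"
      using False by auto
    show ?thesis unfolding L R by simp
  next
    case True
    have e: "[x..<Suc y] = [x..<y] @ [y]" using True by simp
    consider (a) "y < m" | (b) "y = m" | (c) "m < y" by linarith
    then show ?thesis
    proof cases
      case a
      have "sh m y = y" using a by (simp add: sh_def)
      then show ?thesis using Suc a True by (simp add: e)
    next
      case b
      then show ?thesis using Suc True by (simp add: e)
    next
      case c
      have s: "sh m y = y - 1" using c by (simp add: sh_def)
      have x': "(if x \<le> m then x else x - 1) \<le> y - 1" using True c by auto
      have "[(if x \<le> m then x else x - 1)..<y - 1] @ [y - 1] = [(if x \<le> m then x else x - 1)..<y]"
        using x' c by (metis Suc_diff_1 le_less_trans not_less_zero upt_Suc_append gr0I)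
      then show ?thesis using Suc c True s by (simp add: e)
    qed
  qed
qed

lemma sh_inj: "l \<noteq> m \<Longrightarrow> i \<noteq> m \<Longrightarrow> sh m l = sh m i \<longleftrightarrow> l = i"
  by (auto simp: sh_def)

lemma filter_comm: "i \<noteq> m \<Longrightarrow>
  map (sh m) (filter (\<lambda>l. l \<noteq> m) (filter (\<lambda>l. l \<noteq> i) L)) = filter (\<lambda>l. l \<noteq> sh m i) (map (sh m) (filter (\<lambda>l. l \<noteq> m) L))"
  by (induction L) (auto simp: sh_inj)

lemma concat_if_sh: "concat (map (\<lambda>l. if l = m then [] else F (sh m l)) L) = concat (map F (map (sh m) (filter (\<lambda>l. l \<noteq> m) L)))"
  by (induction L) auto

lemma word_map_pos: "word_map f (map (\<lambda>l. (S l, False)) L) = concat (map (\<lambda>l. f (S l)) L)"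
  by (induction L) auto

lemma word_map_concat: "word_map f (concat ws) = concat (map (word_map f) ws)"
  by (induction ws) auto

lemma qdel3: "qdel m {i,k,l} = (if m = i \<or> m = k \<or> m = l then [] else [({sh m i, sh m k, sh m l}, False)])"
  by (simp add: qdel_def gen_def)

lemma qc:
  assumes "1 \<le> i" "1 \<le> k" "i \<noteq> k" "k \<le> n" "1 \<le> m" "m \<le> n"
  shows "word_map (qdel m) (c n i k) = (if m = i \<or> m = k then [] else c (n - 1) (sh m i) (sh m k))"
proof (cases "m = i \<or> m = k")
  case True
  then show ?thesis unfolding c_alt word_map_pos qdel3 by auto
next
  case False
  define Lk where "Lk = [k+1..<n+1] @ [1..<k]"
  have i: "i \<noteq> m" using False by auto
  have a1: "map (sh m) (filter (\<lambda>l. l \<noteq> m) [k+1..<n+1]) = [sh m k + 1..<(n - 1) + 1]"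
    using shfilt[of m "k+1" "n+1"] assms False by (auto simp: sh_def)
  have a2: "map (sh m) (filter (\<lambda>l. l \<noteq> m) [1..<k]) = [1..<sh m k]"
    using shfilt[of m 1 k] assms False by (auto simp: sh_def)
  have LL: "map (sh m) (filter (\<lambda>l. l \<noteq> m) (filter (\<lambda>l. l \<noteq> i) Lk)) = filter (\<lambda>l. l \<noteq> sh m i) ([sh m k + 1..<(n - 1) + 1] @ [1..<sh m k])"
    unfolding filter_comm[OF i] Lk_def filter_append map_append a1 a2 ..
  have "word_map (qdel m) (c n i k) = concat (map (\<lambda>l. if l = m then [] else (\<lambda>l'. [({sh m i, sh m k, l'}, False)]) (sh m l)) (filter (\<lambda>l. l \<noteq> i) Lk))"
    unfolding c_alt word_map_pos qdel3 Lk_def using False by (metis (no_types, lifting))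
  also have "\<dots> = concat (map (\<lambda>l'. [({sh m i, sh m k, l'}, False)]) (map (sh m) (filter (\<lambda>l. l \<noteq> m) (filter (\<lambda>l. l \<noteq> i) Lk))))"
    by (rule concat_if_sh)
  also have "\<dots> = map (\<lambda>l'. ({sh m i, sh m k, l'}, False)) (filter (\<lambda>l. l \<noteq> sh m i) ([sh m k + 1..<(n - 1) + 1] @ [1..<sh m k]))"
    unfolding LL by (rule concat_single)
  also have "\<dots> = c (n - 1) (sh m i) (sh m k)" by (simp only: c_alt)
  finally show ?thesis using False by simp
qed


lemma qphi:
  assumes ij: "1 \<le> i" "i < j" "j \<le> n" and m: "1 \<le> m" "m \<le> n"
  shows "eqv (G_rels (n - 1)) (word_map (qdel m) (phi n (i,j))) (word_map (phi (n - 1)) (pdel m (i,j)))"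
proof -
  define M where "M = concat (map (c n i) (rev [i+1..<j]))"
  have P: "phi n (i,j) = inv_word M @ c n i j @ c n i j @ M" by (simp add: phi_def M_def Let_def)
  have QM: "word_map (qdel m) M = concat (map (\<lambda>k. word_map (qdel m) (c n i k)) (rev [i+1..<j]))"
    by (simp add: M_def word_map_concat o_def)
  have qck: "word_map (qdel m) (c n i k) = (if m = i \<or> m = k then [] else c (n - 1) (sh m i) (sh m k))"
    if "k \<in> set (rev [i+1..<j])" for k
    by (rule qc) (use that ij m in auto)
  have qcj: "word_map (qdel m) (c n i j) = (if m = i \<or> m = j then [] else c (n - 1) (sh m i) (sh m j))"
    by (rule qc) (use ij m in auto)
  consider (a) "m = i" | (b) "m = j" | (c) "m \<noteq> i" "m \<noteq> j" by blast
  then show ?thesis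
  proof cases
    case a
    have "word_map (qdel m) M = []" unfolding QM using qck a by simp
    moreover have "word_map (qdel m) (c n i j) = []" using qcj a by simp
    moreover have "pdel m (i,j) = []" using a by (simp add: pdel_def)
    ultimately show ?thesis unfolding P by (simp add: eqv_refl')
  next
    case b
    have "word_map (qdel m) (c n i j) = []" using qcj b by simp
    moreover have "pdel m (i,j) = []" using b by (simp add: pdel_def)
    ultimately show ?thesis unfolding P using eqv_cancel_word'[of "G_rels (n - 1)" "word_map (qdel m) M"] by simp
  next
    case c
    define i' where "i' = sh m i"
    define j' where "j' = sh m j"
    have "word_map (qdel m) M = concat (map (\<lambda>k. if k = m then [] else c (n - 1) i' (sh m k)) (rev [i+1..<j]))"
      unfolding QM i'_def by (rule arg_cong[where f=concat], rule map_cong[OF refl]) (use qck c in auto)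
    also have "\<dots> = concat (map (c (n - 1) i') (map (sh m) (filter (\<lambda>k. k \<noteq> m) (rev [i+1..<j]))))"
      by (rule concat_if_sh)
    also have "map (sh m) (filter (\<lambda>k. k \<noteq> m) (rev [i+1..<j])) = rev [i'+1..<j']"
    proof -
      have "map (sh m) (filter (\<lambda>k. k \<noteq> m) [i+1..<j]) = [i'+1..<j']"
        using shfilt[of m "i+1" j] c unfolding i'_def j'_def by (auto simp: sh_def)
      moreover have "map (sh m) (filter (\<lambda>k. k \<noteq> m) (rev [i+1..<j])) = rev (map (sh m) (filter (\<lambda>k. k \<noteq> m) [i+1..<j]))"
        by (simp add: rev_filter rev_map)
      ultimately show ?thesis by simp
    qed
    finally have QM': "word_map (qdel m) M = concat (map (c (n - 1) i') (rev [i'+1..<j']))" .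
    have pd: "pdel m (i,j) = gen (i', j')" using c by (simp add: pdel_def i'_def j'_def)
    have "word_map (qdel m) (phi n (i,j)) = word_map (phi (n - 1)) (pdel m (i,j))"
      unfolding P pd using QM' qcj c by (simp add: phi_def Let_def i'_def j'_def)
    then show ?thesis by (simp add: eqv_refl')
  qed
qed

theorem mainTheorem1:
  fixes n :: nat and \<beta> :: "(nat \<times> nat) word"
  assumes "n \<ge> 3"
    and "is_PB_word n \<beta>"
    and "Brunnian_braid n \<beta>"
  shows "Brunnian_G n (word_map (phi n) \<beta>)"
  unfolding Brunnian_G_def
proof
  fix m assume m: "m \<in> {1..n}"
  have B: "eqv (PB_rels (n - 1)) (word_map (pdel m) \<beta>) []" using assms(3) m by (simp add: Brunnian_braid_def)
  have lt: "1 \<le> fst x \<and> fst x < snd x \<and> snd x \<le> n" if "(x,b) \<in> set \<beta>" for x b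
    using assms(2) that unfolding is_PB_word_def by (cases x) fastforce
  have "word_map (qdel m) (word_map (phi n) \<beta>) = word_map (\<lambda>x. word_map (qdel m) (phi n x)) \<beta>"
    by (rule word_map_comp)
  also have "eqv (G_rels (n - 1)) \<dots> (word_map (\<lambda>x. word_map (phi (n - 1)) (pdel m x)) \<beta>)"
  proof (rule eqv_word_map_cong)
    fix x b assume "(x,b) \<in> set \<beta>"
    then have h: "1 \<le> fst x" "fst x < snd x" "snd x \<le> n" using lt by auto
    show "eqv (G_rels (n - 1)) (word_map (qdel m) (phi n x)) (word_map (phi (n - 1)) (pdel m x))"
      using qphi[OF h, of m] m by (cases x) auto
  qed
  also have "word_map (\<lambda>x. word_map (phi (n - 1)) (pdel m x)) \<beta> = word_map (phi (n - 1)) (word_map (pdel m) \<beta>)"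
    by (rule word_map_comp[symmetric])
  also have "eqv (G_rels (n - 1)) \<dots> (word_map (phi (n - 1)) [])"
    by (rule PB_to_G[OF B])
  finally show "eqv (G_rels (n - 1)) (word_map (qdel m) (word_map (phi n) \<beta>)) []" by simp
qed

end
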